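(* There exist constants $C_d$ and $\tilde C_d$ such that for all $L\ge1$ and all Schwartz functions $f\in\mathcal S(\mathbb R^d)$ that are symmetric with respect to each reflection $\rho_j:(x_1,\dots,x_j,\dots,x_d)\mapsto(x_1,\dots,-x_j,\dots,x_d)$ (i.e. $f\circ\rho_j=f$ for $j=1,\dots,d$), we have $$\langle k_1\rangle^2\cdots\langle k_d\rangle^2|\hat f_\#(k)|\le C_d\sum_{\alpha\in\mathbb N_0^d:\ \alpha_j\le2}\sup_{x\in\mathbb R^d}|\langle x\rangle^{2d}\partial^\alpha f(x)|$$ for all $k=(k_1,\dots,k_d)\in\Lambda_L^*$. Furthermore $\hat f_\#\in\ell^1(\Lambda_L^* )$ and $$\|\hat f_\#\|_{*,1}\le\tilde C_d\sum_{\alpha\in\mathbb N_0^d:\ \alpha_j\le2}\sup_{x\in\mathbb R^d}|\langle x\rangle^{2d}\partial^\alpha f(x)|.$$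
   Context: $\Lambda_L=[-L/2,L/2)^d$, $\Lambda_L^*=(\frac1L\mathbb Z)^d$; $\hat f_\#(k)=\int_{\Lambda_L}e^{-2\pi ik\cdot x}f(x)dx$; $\|g\|_{*,1}=|\Lambda_L|^{-1}\sum_{k\in\Lambda_L^*}|g(k)|$; $\langle x\rangle=(1+|x|^2)^{1/2}$. *)

theory Defs
  imports "HOL-Analysis.Analysis"
begin

definition partial_deriv :: "'d::finite \<Rightarrow> (real^'d \<Rightarrow> complex) \<Rightarrow> real^'d \<Rightarrow> complex" where
  "partial_deriv j f x = vector_derivative (\<lambda>t. f (x + t *\<^sub>R axis j 1)) (at 0)"

fun partials :: "'d::finite list \<Rightarrow> (real^'d \<Rightarrow> complex) \<Rightarrow> real^'d \<Rightarrow> complex" where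
  "partials [] f = f"
| "partials (j # js) f = partial_deriv j (partials js f)"

(* Multi-index derivative <partial>^<alpha>: differentiate <alpha> j times in direction j
 (in some order; irrelevant for smooth functions). *)
definition dmulti :: "('d::finite \<Rightarrow> nat) \<Rightarrow> (real^'d \<Rightarrow> complex) \<Rightarrow> real^'d \<Rightarrow> complex" where
  "dmulti \<alpha> f = partials (SOME js. \<forall>j. count_list js j = \<alpha> j) f"

definition schwartz :: "(real^'d::finite \<Rightarrow> complex) \<Rightarrow> bool" where
  "schwartz f \<longleftrightarrow>
     (\<forall>js x j. (\<lambda>t. partials js f (x + t *\<^sub>R axis j 1)) differentiable (at 0)) \<and>
     (\<forall>js. continuous_on UNIV (partials js f)) \<and>
     (\<forall>js (N::nat). \<exists>B. \<forall>x. norm x ^ N * cmod (partials js f x) \<le> B)"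

definition reflect :: "'d::finite \<Rightarrow> real^'d \<Rightarrow> real^'d" where
  "reflect j x = (\<chi> i. if i = j then - (x $ i) else x $ i)"

definition torus_box :: "real \<Rightarrow> (real^'d::finite) set" where
  "torus_box L = {x. \<forall>j. - L / 2 \<le> x $ j \<and> x $ j < L / 2}"

definition dual_lattice :: "real \<Rightarrow> (real^'d::finite) set" where
  "dual_lattice L = {k. \<forall>j. \<exists>n::int. k $ j = of_int n / L}"

definition fourier_box :: "real \<Rightarrow> (real^'d::finite \<Rightarrow> complex) \<Rightarrow> real^'d \<Rightarrow> complex" where
  "fourier_box L f k =
     (LINT x : torus_box L | lborel. exp (- (2 * pi * \<i> * complex_of_real (k \<bullet> x))) * f x)"

definition jbr :: "'a::real_normed_vector \<Rightarrow> real" where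
  "jbr x = sqrt (1 + norm x ^ 2)"

definition schwartz_seminorm :: "(real^'d::finite \<Rightarrow> complex) \<Rightarrow> real" where
  "schwartz_seminorm f =
     (\<Sum>\<alpha>\<in>{\<alpha>::'d \<Rightarrow> nat. \<forall>j. \<alpha> j \<le> 2}.
        (SUP x. \<bar>jbr x ^ (2 * CARD('d))\<bar> * cmod (dmulti \<alpha> f x)))"

end

theory Submission
  imports Defs
begin

definition smooth :: "(real^'d::finite \<Rightarrow> complex) \<Rightarrow> bool" where
  "smooth g \<longleftrightarrow> (\<forall>js x j. (\<lambda>t. partials js g (x + t *\<^sub>R axis j 1)) differentiable (at 0)) \<and>
     (\<forall>js. continuous_on UNIV (partials js g))"

lemma vd_shift:
  assumes "((\<lambda>u. H (s + u)) has_vector_derivative D) (at 0)"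
  shows "(H has_vector_derivative D) (at s)"
proof -
  have 1: "((\<lambda>u. u - s) has_vector_derivative 1) (at s)"
    by (auto intro!: derivative_eq_intros)
  have "(((\<lambda>u. H (s + u)) \<circ> (\<lambda>u. u - s)) has_vector_derivative (1 *\<^sub>R D)) (at s)"
    by (rule vector_diff_chain_at[OF 1]) (simp add: assms)
  then show ?thesis by (simp add: o_def)
qed

lemma pd_hvd:
  fixes h :: "real^'d::finite \<Rightarrow> complex"
  assumes "\<And>x. (\<lambda>t. h (x + t *\<^sub>R axis j 1)) differentiable (at 0)"
  shows "((\<lambda>t. h (x + t *\<^sub>R axis j 1)) has_vector_derivative partial_deriv j h (x + s *\<^sub>R axis j 1)) (at s)"
proof (rule vd_shift)
  have e: "(\<lambda>u. h (x + (s + u) *\<^sub>R axis j 1)) = (\<lambda>u. h ((x + s *\<^sub>R axis j 1) + u *\<^sub>R axis j 1))"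
    by (simp add: algebra_simps scaleR_add_left)
  show "((\<lambda>u. h (x + (s + u) *\<^sub>R axis j 1)) has_vector_derivative partial_deriv j h (x + s *\<^sub>R axis j 1)) (at 0)"
    unfolding e partial_deriv_def using assms[of "x + s *\<^sub>R axis j 1"]
    by (simp add: vector_derivative_works)
qed

lemma smooth_partials: "smooth g \<Longrightarrow> smooth (partials ls g)"
proof -
  have pa: "partials js (partials ls g) = partials (js @ ls) g" for js
    by (induction js) auto
  assume "smooth g" then show ?thesis unfolding smooth_def pa by blast
qed

lemma smooth_hvd:
  assumes "smooth g"
  shows "((\<lambda>t. partials ls g (x + t *\<^sub>R axis j 1)) has_vector_derivative partials (j # ls) g (x + s *\<^sub>R axis j 1)) (at s)"
  using pd_hvd[of "partials ls g" j x s] assms unfolding smooth_def by simp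

lemma smooth_cont: "smooth g \<Longrightarrow> continuous_on UNIV (partials ls g)"
  unfolding smooth_def by blast

lemma smooth_Re_deriv:
  assumes "smooth g"
  shows "((\<lambda>t. Re (c * partials ls g (x + t *\<^sub>R axis j 1))) has_real_derivative Re (c * partials (j # ls) g (x + s *\<^sub>R axis j 1))) (at s)"
proof -
  have "((\<lambda>t. c * partials ls g (x + t *\<^sub>R axis j 1)) has_vector_derivative c * partials (j # ls) g (x + s *\<^sub>R axis j 1)) (at s)"
    by (rule has_vector_derivative_mult_right[OF smooth_hvd[OF assms]])
  from bounded_linear.has_vector_derivative[OF bounded_linear_Re this]
  show ?thesis by (simp add: has_real_derivative_iff_has_vector_derivative)
qed

lemma clairaut_mvt:
  fixes g :: "real^'d::finite \<Rightarrow> complex"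
  assumes sm: "smooth g" and h: "h > 0"
  shows "\<exists>y. norm (y - x) \<le> 2 * h \<and>
     Re (c * (g (x + h *\<^sub>R axis i 1 + h *\<^sub>R axis j 1) - g (x + h *\<^sub>R axis i 1) - g (x + h *\<^sub>R axis j 1) + g x))
       = h^2 * Re (c * partials [j, i] g y)"
proof -
  define ei :: "real^'d" where "ei = axis i 1"
  define ej :: "real^'d" where "ej = axis j 1"
  define \<phi> where "\<phi> s = Re (c * partials [] g ((x + h *\<^sub>R ej) + s *\<^sub>R ei)) - Re (c * partials [] g (x + s *\<^sub>R ei))" for s
  define \<phi>' where "\<phi>' s = Re (c * partials [i] g ((x + h *\<^sub>R ej) + s *\<^sub>R ei)) - Re (c * partials [i] g (x + s *\<^sub>R ei))" for s
  have d\<phi>: "(\<phi> has_real_derivative \<phi>' s) (at s)" for s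
    unfolding \<phi>_def \<phi>'_def ei_def
    by (intro derivative_intros smooth_Re_deriv[OF sm])
  obtain \<sigma> where \<sigma>: "0 < \<sigma>" "\<sigma> < h" "\<phi> h - \<phi> 0 = (h - 0) * \<phi>' \<sigma>"
    using MVT2[of 0 h \<phi> \<phi>'] h d\<phi> by auto
  define \<psi> where "\<psi> t = Re (c * partials [i] g ((x + \<sigma> *\<^sub>R ei) + t *\<^sub>R ej))" for t
  define \<psi>' where "\<psi>' t = Re (c * partials [j, i] g ((x + \<sigma> *\<^sub>R ei) + t *\<^sub>R ej))" for t
  have d\<psi>: "(\<psi> has_real_derivative \<psi>' t) (at t)" for t
    unfolding \<psi>_def \<psi>'_def ej_def
    by (intro derivative_intros smooth_Re_deriv[OF sm])
  obtain \<tau> where \<tau>: "0 < \<tau>" "\<tau> < h" "\<psi> h - \<psi> 0 = (h - 0) * \<psi>' \<tau>"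
    using MVT2[of 0 h \<psi> \<psi>'] h d\<psi> by auto
  have "\<phi>' \<sigma> = \<psi> h - \<psi> 0"
    unfolding \<phi>'_def \<psi>_def by (simp add: algebra_simps)
  define y where "y = (x + \<sigma> *\<^sub>R ei) + \<tau> *\<^sub>R ej"
  have ny: "norm (y - x) \<le> 2 * h"
  proof -
    have "norm (y - x) \<le> norm (\<sigma> *\<^sub>R ei) + norm (\<tau> *\<^sub>R ej)"
      unfolding y_def by (metis add_diff_cancel_left' add.assoc norm_triangle_ineq)
    also have "\<dots> = \<sigma> + \<tau>" using \<sigma> \<tau> by (simp add: ei_def ej_def)
    finally show ?thesis using \<sigma> \<tau> by simp
  qed
  have "Re (c * (g (x + h *\<^sub>R axis i 1 + h *\<^sub>R axis j 1) - g (x + h *\<^sub>R axis i 1) - g (x + h *\<^sub>R axis j 1) + g x))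
        = \<phi> h - \<phi> 0"
    unfolding \<phi>_def ei_def ej_def by (simp add: algebra_simps)
  also have "\<dots> = h^2 * Re (c * partials [j, i] g y)"
    using \<sigma>(3) \<tau>(3) \<open>\<phi>' \<sigma> = \<psi> h - \<psi> 0\<close> unfolding \<psi>'_def y_def
    by (simp add: power2_eq_square)
  finally show ?thesis using ny by blast
qed

lemma clairaut_Re:
  fixes g :: "real^'d::finite \<Rightarrow> complex"
  assumes sm: "smooth g" and c: "cmod c \<le> 1"
  shows "Re (c * partials [j, i] g x) = Re (c * partials [i, j] g x)"
proof (rule ccontr)
  define F1 where "F1 y = Re (c * partials [j, i] g y)" for y
  define F2 where "F2 y = Re (c * partials [i, j] g y)" for y
  assume ne: "Re (c * partials [j, i] g x) \<noteq> Re (c * partials [i, j] g x)"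
  define e where "e = \<bar>F1 x - F2 x\<bar> / 3"
  have e: "e > 0" using ne unfolding e_def F1_def F2_def by simp
  have cont: "\<exists>d>0. \<forall>y. dist y x < d \<longrightarrow> \<bar>Re (c * partials ls g y) - Re (c * partials ls g x)\<bar> < e" for ls
  proof -
    from smooth_cont[OF sm, of ls] have "isCont (partials ls g) x"
      by (simp add: continuous_on_eq_continuous_at)
    then obtain d where d: "d > 0" "\<And>y. dist y x < d \<Longrightarrow> dist (partials ls g y) (partials ls g x) < e"
      using e unfolding continuous_at_eps_delta by blast
    have "\<bar>Re (c * partials ls g y) - Re (c * partials ls g x)\<bar> < e" if "dist y x < d" for y
    proof -
      have "\<bar>Re (c * partials ls g y) - Re (c * partials ls g x)\<bar> = \<bar>Re (c * (partials ls g y - partials ls g x))\<bar>"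
        by (simp add: algebra_simps)
      also have "\<dots> \<le> cmod (c * (partials ls g y - partials ls g x))" by (rule abs_Re_le_cmod)
      also have "\<dots> = cmod c * dist (partials ls g y) (partials ls g x)" by (simp add: norm_mult dist_norm)
      also have "\<dots> \<le> 1 * dist (partials ls g y) (partials ls g x)" by (intro mult_right_mono c) simp
      also have "\<dots> < e" using d that by simp
      finally show ?thesis .
    qed
    then show ?thesis using d by blast
  qed
  obtain d1 where d1: "d1 > 0" "\<And>y. dist y x < d1 \<Longrightarrow> \<bar>F1 y - F1 x\<bar> < e"
    using cont[of "[j, i]"] unfolding F1_def by blast
  obtain d2 where d2: "d2 > 0" "\<And>y. dist y x < d2 \<Longrightarrow> \<bar>F2 y - F2 x\<bar> < e"
    using cont[of "[i, j]"] unfolding F2_def by blast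
  define h where "h = min d1 d2 / 3"
  have h: "h > 0" using d1 d2 unfolding h_def by simp
  obtain y1 where y1: "norm (y1 - x) \<le> 2 * h"
    "Re (c * (g (x + h *\<^sub>R axis i 1 + h *\<^sub>R axis j 1) - g (x + h *\<^sub>R axis i 1) - g (x + h *\<^sub>R axis j 1) + g x))
       = h^2 * F1 y1"
    using clairaut_mvt[OF sm h, of x c i j] unfolding F1_def by blast
  obtain y2 where y2: "norm (y2 - x) \<le> 2 * h"
    "Re (c * (g (x + h *\<^sub>R axis j 1 + h *\<^sub>R axis i 1) - g (x + h *\<^sub>R axis j 1) - g (x + h *\<^sub>R axis i 1) + g x))
       = h^2 * F2 y2"
    using clairaut_mvt[OF sm h, of x c j i] unfolding F2_def by blast
  have "h^2 * F1 y1 = h^2 * F2 y2"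
    using y1(2) y2(2) by (simp add: algebra_simps)
  then have eq: "F1 y1 = F2 y2" using h by simp
  have "dist y1 x < d1" using y1(1) h d1 d2 unfolding h_def dist_norm by simp
  then have 1: "\<bar>F1 y1 - F1 x\<bar> < e" by (rule d1(2))
  have "dist y2 x < d2" using y2(1) h d1 d2 unfolding h_def dist_norm by simp
  then have 2: "\<bar>F2 y2 - F2 x\<bar> < e" by (rule d2(2))
  have "\<bar>F1 x - F2 x\<bar> < 2 * e" using 1 2 eq by linarith
  moreover have "3 * e = \<bar>F1 x - F2 x\<bar>" unfolding e_def by simp
  ultimately show False using e by linarith
qed

lemma clairaut:
  fixes g :: "real^'d::finite \<Rightarrow> complex"
  assumes sm: "smooth g"
  shows "partials [j, i] g x = partials [i, j] g x"
proof (rule complex_eqI)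
  show "Re (partials [j, i] g x) = Re (partials [i, j] g x)"
    using clairaut_Re[OF sm, of 1] by simp
  show "Im (partials [j, i] g x) = Im (partials [i, j] g x)"
    using clairaut_Re[OF sm, of "- \<i>"] by simp
qed

lemma partials_append: "partials (xs @ ys) g = partials xs (partials ys g)"
  by (induction xs) auto

lemma partials_swap:
  assumes "smooth g"
  shows "partials (a # b # r) g = partials (b # a # r) g"
proof -
  have "partials [a, b] (partials r g) = partials [b, a] (partials r g)"
    using clairaut[OF smooth_partials[OF assms, of r]] by blast
  then show ?thesis using partials_append[of "[a,b]" r g] partials_append[of "[b,a]" r g] by simp
qed

lemma partials_move_front:
  assumes "smooth g"
  shows "partials (p @ a # q) g = partials (a # p @ q) g"
proof (induction p)
  case Nil then show ?case by simp
next
  case (Cons b p)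
  have "partials ((b # p) @ a # q) g = partial_deriv b (partials (p @ a # q) g)" by simp
  also have "\<dots> = partial_deriv b (partials (a # p @ q) g)" using Cons by simp
  also have "\<dots> = partials (b # a # p @ q) g" by simp
  also have "\<dots> = partials (a # b # p @ q) g" by (rule partials_swap[OF assms])
  finally show ?case by simp
qed

lemma partials_perm:
  assumes "smooth g" "\<And>x. count_list l1 x = count_list l2 x"
  shows "partials l1 g = partials l2 g"
  using assms(2)
proof (induction l1 arbitrary: l2)
  case Nil
  show ?case
  proof (cases l2)
    case Nil then show ?thesis by simp
  next
    case (Cons y ys)
    then have "count_list l2 y \<ge> 1" by simp
    with Nil[of y] show ?thesis by simp
  qed
next
  case (Cons a r)
  have "count_list l2 a \<ge> 1" using Cons.prems[of a] by simp
  then have "a \<in> set l2" by (metis count_list_0_iff le_zero_eq one_neq_zero)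
  then obtain p q where l2: "l2 = p @ a # q" by (meson split_list)
  have "count_list r x = count_list (p @ q) x" for x
    using Cons.prems[of x] unfolding l2 by (simp split: if_splits)
  then have "partials r g = partials (p @ q) g" by (rule Cons.IH)
  then have "partials (a # r) g = partials (a # p @ q) g" by simp
  also have "\<dots> = partials l2 g" unfolding l2 by (rule partials_move_front[OF assms(1), symmetric])
  finally show ?case .
qed

lemma dmulti_eq:
  assumes "smooth g" "\<And>j. count_list ls j = \<alpha> j"
  shows "dmulti \<alpha> g = partials ls g"
proof -
  have ex: "\<exists>js. \<forall>j. count_list js j = \<alpha> j" using assms(2) by blast
  define js where "js = (SOME js. \<forall>j. count_list js j = \<alpha> j)"
  have "\<forall>j. count_list js j = \<alpha> j" unfolding js_def by (rule someI_ex[OF ex])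
  then have "partials js g = partials ls g"
    using assms by (intro partials_perm) auto
  then show ?thesis unfolding dmulti_def js_def by simp
qed

definition ex :: "real \<Rightarrow> real \<Rightarrow> complex" where
  "ex k t = exp (-(2 * pi * \<i> * complex_of_real (k * t)))"

lemma ex_hvd: "(ex k has_vector_derivative (-(2 * pi * \<i> * k)) * ex k t) (at t)"
proof -
  have "((\<lambda>z. exp (-(2 * pi * \<i> * of_real k * z))) has_field_derivative
          exp (-(2 * pi * \<i> * of_real k * of_real t)) * (-(2 * pi * \<i> * of_real k))) (at (of_real t))"
    by (auto intro!: derivative_eq_intros)
  from has_vector_derivative_real_field[OF this]
  show ?thesis unfolding ex_def by (simp add: mult.commute mult.left_commute)
qed

lemma ex_cont: "continuous_on S (ex k)"
  unfolding ex_def by (intro continuous_intros)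

lemma ex_minus:
  assumes "k * (2 * a) \<in> \<int>"
  shows "ex k (-a) = ex k a"
proof -
  obtain n :: int where n: "k * (2 * a) = of_int n" using assms by (auto elim: Ints_cases)
  have "ex k (-a) = ex k a * exp ((2 * of_int n * pi) * \<i>)"
    unfolding ex_def n[symmetric] by (simp add: exp_add[symmetric] algebra_simps)
  also have "exp ((2 * of_int n * pi) * \<i>) = 1" by (rule exp_integer_2pi) simp
  finally show ?thesis by simp
qed

lemma ibp1:
  fixes \<phi> \<phi>1 \<phi>2 :: "real \<Rightarrow> complex" and a k :: real
  assumes a: "a > 0" and kL: "k * (2 * a) \<in> \<int>"
    and d1: "\<And>t. (\<phi> has_vector_derivative \<phi>1 t) (at t)"
    and d2: "\<And>t. (\<phi>1 has_vector_derivative \<phi>2 t) (at t)"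
    and c2: "continuous_on UNIV \<phi>2"
    and ev: "\<And>t. \<phi> (-t) = \<phi> t"
  shows "complex_of_real (1 + 4 * pi^2 * k^2) * (\<integral>t. (indicator {-a..<a} t * ex k t) * \<phi> t \<partial>lborel)
        = (\<integral>t. (indicator {-a..<a} t * ex k t) * (\<phi> t - \<phi>2 t) \<partial>lborel) + 2 * ex k a * \<phi>1 a"
proof -
  define e where "e = ex k"
  define c where "c = -(2 * pi * \<i> * k)"
  have de: "(e has_vector_derivative c * e t) (at t)" for t unfolding e_def c_def by (rule ex_hvd)
  have ce: "continuous_on S e" for S unfolding e_def by (rule ex_cont)
  have c1: "continuous_on S \<phi>" for S
    using d1 by (meson continuous_at_imp_continuous_on has_vector_derivative_continuous)
  have c2': "continuous_on S \<phi>2" for S using c2 continuous_on_subset by blast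
  have odd: "\<phi>1 (-a) = - \<phi>1 a"
  proof -
    have m: "((\<lambda>t. - t) has_vector_derivative (-1)) (at a)" by (auto intro!: derivative_eq_intros)
    have "((\<phi> \<circ> (\<lambda>t. - t)) has_vector_derivative ((-1) *\<^sub>R \<phi>1 (-a))) (at a)"
      by (rule vector_diff_chain_at[OF m]) (simp add: d1)
    moreover have "\<phi> \<circ> (\<lambda>t. - t) = \<phi>" using ev by (auto simp: o_def)
    ultimately have "((\<phi>) has_vector_derivative (- \<phi>1 (-a))) (at a)" by simp
    then have "- \<phi>1 (-a) = \<phi>1 a" using d1 vector_derivative_unique_at by blast
    then show ?thesis by (metis minus_minus)
  qed
  define K where "K = complex_of_real (4 * pi^2 * k^2)"
  have cc: "c * c = - K" unfolding c_def K_def by (simp add: power2_eq_square algebra_simps)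
  define G where "G t = e t * \<phi>1 t - c * e t * \<phi> t" for t
  define g where "g t = e t * \<phi>2 t + K * (e t * \<phi> t)" for t
  have dG: "(G has_vector_derivative g t) (at t)" for t
  proof -
    have "(G has_vector_derivative (e t * \<phi>2 t + c * e t * \<phi>1 t - (c * e t * \<phi>1 t + c * (c * e t) * \<phi> t))) (at t)"
    proof -
      have 1: "((\<lambda>t. e t * \<phi>1 t) has_vector_derivative (e t * \<phi>2 t + (c * e t) * \<phi>1 t)) (at t)"
        by (rule has_vector_derivative_mult[OF de d2])
      have 2: "((\<lambda>t. c * e t) has_vector_derivative c * (c * e t)) (at t)"
        by (rule has_vector_derivative_mult_right[OF de])
      have 3: "((\<lambda>t. c * e t * \<phi> t) has_vector_derivative (c * e t * \<phi>1 t + c * (c * e t) * \<phi> t)) (at t)"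
        by (rule has_vector_derivative_mult[OF 2 d1])
      show ?thesis unfolding G_def by (rule has_vector_derivative_diff[OF 1 3])
    qed
    moreover have "e t * \<phi>2 t + c * e t * \<phi>1 t - (c * e t * \<phi>1 t + c * (c * e t) * \<phi> t) = g t"
      proof -
      have "c * (c * e t) * \<phi> t = (c * c) * (e t * \<phi> t)" by (simp add: mult.assoc)
      then show ?thesis unfolding g_def cc by simp
    qed
    ultimately show ?thesis by simp
  qed
  have cg: "continuous_on {-a..a} g" unfolding g_def
    by (intro continuous_intros ce c1 c2')
  have FTC: "integral\<^sup>L lborel (\<lambda>t. indicator {-a..a} t *\<^sub>R g t) = G a - G (-a)"
    using a dG by (intro integral_FTC_atLeastAtMost cg) (auto intro: has_vector_derivative_at_within)
  have Gdiff: "G a - G (-a) = 2 * e a * \<phi>1 a"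
    unfolding G_def using ex_minus[OF kL] odd ev[of a] unfolding e_def by (simp add: algebra_simps)
  have int: "integrable lborel (\<lambda>t. indicator {-a..a} t *\<^sub>R h t)" if "continuous_on {-a..a} h" for h :: "real \<Rightarrow> complex"
    by (rule borel_integrable_compact[OF compact_Icc that])
  have ie1: "integrable lborel (\<lambda>t. indicator {-a..a} t *\<^sub>R (e t * \<phi> t))" by (intro int continuous_intros ce c1)
  have ie2: "integrable lborel (\<lambda>t. indicator {-a..a} t *\<^sub>R (e t * \<phi>2 t))" by (intro int continuous_intros ce c2')
  have conv: "(\<integral>t. (indicator {-a..<a} t * e t) * h t \<partial>lborel) = (\<integral>t. indicator {-a..a} t *\<^sub>R (e t * h t) \<partial>lborel)"
    if "continuous_on UNIV h" for h :: "real \<Rightarrow> complex"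
  proof (rule integral_cong_AE)
    have "continuous_on UNIV (\<lambda>t. e t * h t)" by (intro continuous_intros ce that)
    then have m: "(\<lambda>t. e t * h t) \<in> borel_measurable lborel" by (simp add: borel_measurable_continuous_onI)
    show "(\<lambda>t. (indicator {-a..<a} t * e t) * h t) \<in> borel_measurable lborel"
      using m by (simp add: mult.assoc)
    show "(\<lambda>t. indicator {-a..a} t *\<^sub>R (e t * h t)) \<in> borel_measurable lborel"
      using m by simp
    show "AE t in lborel. (indicator {-a..<a} t * e t) * h t = indicator {-a..a} t *\<^sub>R (e t * h t)"
      using AE_lborel_singleton[of a] by eventually_elim (auto simp: indicator_def)
  qed
  have cphi: "continuous_on UNIV \<phi>" by (rule c1)
  have cd: "continuous_on UNIV (\<lambda>t. \<phi> t - \<phi>2 t)" by (intro continuous_intros c1 c2')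
  have "(\<integral>t. indicator {-a..a} t *\<^sub>R g t \<partial>lborel)
        = (\<integral>t. indicator {-a..a} t *\<^sub>R (e t * \<phi>2 t) \<partial>lborel) + K * (\<integral>t. indicator {-a..a} t *\<^sub>R (e t * \<phi> t) \<partial>lborel)"
  proof -
    have i3: "integrable lborel (\<lambda>t. K * (indicator {-a..a} t *\<^sub>R (e t * \<phi> t)))"
      by (rule integrable_mult_right[OF ie1])
    have r: "indicator {-a..a} t *\<^sub>R (K * (e t * \<phi> t)) = K * (indicator {-a..a} t *\<^sub>R (e t * \<phi> t))" for t
      by (simp add: mult_scaleR_right)
    show ?thesis
      unfolding g_def scaleR_add_right r
      by (simp only: Bochner_Integration.integral_add[OF ie2 i3] integral_mult_right_zero)
  qed
  then have key: "(\<integral>t. indicator {-a..a} t *\<^sub>R (e t * \<phi>2 t) \<partial>lborel) + K * (\<integral>t. indicator {-a..a} t *\<^sub>R (e t * \<phi> t) \<partial>lborel)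
      = 2 * e a * \<phi>1 a" using FTC Gdiff by simp
  define IA where "IA = (\<integral>t. indicator {-a..a} t *\<^sub>R (e t * \<phi> t) \<partial>lborel)"
  define IB where "IB = (\<integral>t. indicator {-a..a} t *\<^sub>R (e t * \<phi>2 t) \<partial>lborel)"
  have "(\<integral>t. indicator {-a..a} t *\<^sub>R (e t * (\<phi> t - \<phi>2 t)) \<partial>lborel) = IA - IB"
    unfolding IA_def IB_def
    by (subst Bochner_Integration.integral_diff[symmetric, OF ie1 ie2]) (simp add: algebra_simps)
  then have B: "(\<integral>t. (indicator {-a..<a} t * e t) * (\<phi> t - \<phi>2 t) \<partial>lborel) = IA - IB"
    using conv[OF cd] by simp
  have A: "(\<integral>t. (indicator {-a..<a} t * e t) * \<phi> t \<partial>lborel) = IA"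
    using conv[OF cphi] unfolding IA_def by simp
  have key': "2 * e a * \<phi>1 a = IB + K * IA" using key unfolding IA_def IB_def by simp
  have oK: "complex_of_real (1 + 4 * pi^2 * k^2) = 1 + K" unfolding K_def by simp
  have "complex_of_real (1 + 4 * pi^2 * k^2) * (\<integral>t. (indicator {-a..<a} t * e t) * \<phi> t \<partial>lborel)
        = (\<integral>t. (indicator {-a..<a} t * e t) * (\<phi> t - \<phi>2 t) \<partial>lborel) + 2 * e a * \<phi>1 a"
    unfolding A B key' oK by (simp add: algebra_simps)
  then show ?thesis unfolding e_def .
qed

lemma Basis_vec_ex: "b \<in> (Basis :: (real^'d::finite) set) \<Longrightarrow> \<exists>i. b = axis i 1"
  unfolding Basis_vec_def by auto

lemma measurable_vec:
  fixes F :: "'a \<Rightarrow> 'd::finite \<Rightarrow> real"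
  assumes "\<And>i. (\<lambda>z. F z i) \<in> borel_measurable M"
  shows "(\<lambda>z. (\<chi> i. F z i) :: real^'d) \<in> borel_measurable M"
proof -
  have "(\<lambda>z. (\<chi> i. F z i) \<bullet> b) \<in> borel_measurable M" if bB: "b \<in> Basis" for b :: "real^'d"
  proof -
    obtain i where b: "b = axis i 1" using Basis_vec_ex[OF bB] by blast
    have "(\<lambda>z. (\<chi> i. F z i) \<bullet> b) = (\<lambda>z. F z i)" unfolding b by (simp add: inner_axis)
    then show ?thesis using assms[of i] by simp
  qed
  then show ?thesis using borel_measurable_euclidean_space by blast
qed

definition setc :: "'d::finite \<Rightarrow> real \<Rightarrow> real^'d \<Rightarrow> real^'d" where
  "setc j t x = (\<chi> i. if i = j then t else x $ i)"

definition vc :: "'d::finite set \<Rightarrow> ('d \<Rightarrow> real) \<Rightarrow> real^'d \<Rightarrow> real^'d" where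
  "vc I z y = (\<chi> i. if i \<in> I then z i else y $ i)"

definition EE :: "real \<Rightarrow> real^'d::finite \<Rightarrow> 'd set \<Rightarrow> ('d \<Rightarrow> real) \<Rightarrow> complex" where
  "EE a k I z = (\<Prod>i\<in>I. indicator {-a..<a} (z i) * ex (k $ i) (z i))"

definition PP :: "real \<Rightarrow> real^'d::finite \<Rightarrow> 'd set \<Rightarrow> (real^'d \<Rightarrow> complex) \<Rightarrow> real^'d \<Rightarrow> complex" where
  "PP a k I g y = (\<integral>z. EE a k I z * g (vc I z y) \<partial>(\<Pi>\<^sub>M i\<in>I. lborel))"

lemma norm_ex [simp]: "norm (ex k t) = 1"
  unfolding ex_def by (simp add: norm_exp_eq_Re)

lemma norm_EE: "norm (EE a k I z) = (\<Prod>i\<in>I. indicator {-a..<a} (z i))"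
  unfolding EE_def prod_norm[symmetric] norm_mult by (intro prod.cong) (auto simp: indicator_def)

lemma vc_meas: "(\<lambda>z. vc I z y) \<in> borel_measurable (\<Pi>\<^sub>M i\<in>I. lborel)"
  unfolding vc_def
proof (intro measurable_vec)
  fix i show "(\<lambda>z. if i \<in> I then z i else y $ i) \<in> borel_measurable (\<Pi>\<^sub>M i\<in>I. lborel)"
    by (cases "i \<in> I") (simp_all add: measurable_component_singleton)
qed

lemma ex_meas [measurable]: "ex k \<in> borel_measurable borel"
  by (intro borel_measurable_continuous_onI ex_cont)

lemma EE_meas: "finite I \<Longrightarrow> (\<lambda>z. EE a k I z) \<in> borel_measurable (\<Pi>\<^sub>M i\<in>I. lborel)"
  unfolding EE_def by measurable

lemma Ico_fin: "emeasure lborel {-a..<a::real} < top"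
proof (cases "-a \<le> a")
  case True then show ?thesis by (simp add: emeasure_lborel_Ico)
next
  case False then have "{-a..<a} = {}" by auto
  then show ?thesis by simp
qed

lemma int_Ico [simp]: "integrable lborel (indicator {-a..<a::real} :: real \<Rightarrow> real)"
  by (rule integrable_real_indicator) (auto simp: Ico_fin)

lemma int_PP:
  fixes g :: "real^'d::finite \<Rightarrow> complex"
  assumes I: "finite I" and c: "continuous_on UNIV g" and b: "\<And>x. norm (g x) \<le> B"
  shows "integrable (\<Pi>\<^sub>M i\<in>I. lborel) (\<lambda>z. EE a k I z * g (vc I z y))"
proof (rule Bochner_Integration.integrable_bound)
  interpret finite_product_sigma_finite "\<lambda>_. lborel" I by standard (simp add: I)
  show "integrable (\<Pi>\<^sub>M i\<in>I. lborel) (\<lambda>z. B * (\<Prod>i\<in>I. indicator {-a..<a} (z i) :: real))"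
    by (intro integrable_mult_right product_integrable_prod I) auto
  have gm: "g \<in> borel_measurable borel" by (rule borel_measurable_continuous_onI[OF c])
  show "(\<lambda>z. EE a k I z * g (vc I z y)) \<in> borel_measurable (\<Pi>\<^sub>M i\<in>I. lborel)"
    using EE_meas[OF I] measurable_comp[OF vc_meas gm] by (auto simp: o_def)
  show "AE z in \<Pi>\<^sub>M i\<in>I. lborel. norm (EE a k I z * g (vc I z y)) \<le> norm (B * (\<Prod>i\<in>I. indicator {-a..<a} (z i) :: real))"
  proof (rule AE_I2)
    fix z
    have B0: "B \<ge> 0" using b[of 0] norm_ge_zero order_trans by blast
    have p0: "0 \<le> (\<Prod>i\<in>I. indicator {-a..<a} (z i) :: real)" by (intro prod_nonneg) auto
    have "norm (EE a k I z * g (vc I z y)) = (\<Prod>i\<in>I. indicator {-a..<a} (z i)) * norm (g (vc I z y))"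
      by (simp add: norm_mult norm_EE)
    also have "\<dots> \<le> (\<Prod>i\<in>I. indicator {-a..<a} (z i)) * B" by (intro mult_left_mono b p0)
    finally show "norm (EE a k I z * g (vc I z y)) \<le> norm (B * (\<Prod>i\<in>I. indicator {-a..<a} (z i) :: real))"
      using B0 p0 by (simp add: abs_mult mult.commute)
  qed
qed

lemma vc_insert_upd:
  "j \<notin> I \<Longrightarrow> vc (insert j I) (x(j := t)) y = setc j t (vc I x y)"
  unfolding vc_def setc_def by (auto simp: vec_eq_iff)

lemma EE_insert_upd:
  assumes "finite I" "j \<notin> I"
  shows "EE a k (insert j I) (x(j := t)) = (indicator {-a..<a} t * ex (k $ j) t) * EE a k I x"
proof -
  have "(\<Prod>i\<in>I. indicator {-a..<a} ((x(j := t)) i) * ex (k $ i) ((x(j := t)) i))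
      = (\<Prod>i\<in>I. indicator {-a..<a} (x i) * ex (k $ i) (x i) :: complex)"
    using assms(2) by (intro prod.cong) auto
  then show ?thesis unfolding EE_def using assms by (simp add: prod.insert)
qed

lemma PP_insert:
  fixes g :: "real^'d::finite \<Rightarrow> complex"
  assumes I: "finite I" "j \<notin> I" and c: "continuous_on UNIV g" and b: "\<And>x. norm (g x) \<le> B"
  shows "PP a k (insert j I) g y = (\<integral>z. EE a k I z * (\<integral>t. (indicator {-a..<a} t * ex (k $ j) t) * g (setc j t (vc I z y)) \<partial>lborel) \<partial>(\<Pi>\<^sub>M i\<in>I. lborel))"
proof -
  interpret product_sigma_finite "\<lambda>_::'d. lborel :: real measure" by standard
  have "PP a k (insert j I) g y = (\<integral>z. (\<integral>t. EE a k (insert j I) (z(j := t)) * g (vc (insert j I) (z(j := t)) y) \<partial>lborel) \<partial>(\<Pi>\<^sub>M i\<in>I. lborel))"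
    unfolding PP_def by (rule product_integral_insert[OF I int_PP[OF _ c b]]) (simp add: I)
  also have "\<dots> = (\<integral>z. EE a k I z * (\<integral>t. (indicator {-a..<a} t * ex (k $ j) t) * g (setc j t (vc I z y)) \<partial>lborel) \<partial>(\<Pi>\<^sub>M i\<in>I. lborel))"
  proof (rule Bochner_Integration.integral_cong[OF refl])
    fix z
    have "(\<integral>t. EE a k (insert j I) (z(j := t)) * g (vc (insert j I) (z(j := t)) y) \<partial>lborel)
        = (\<integral>t. EE a k I z * ((indicator {-a..<a} t * ex (k $ j) t) * g (setc j t (vc I z y))) \<partial>lborel)"
      unfolding EE_insert_upd[OF I] vc_insert_upd[OF I(2)] by (simp add: mult_ac)
    also have "\<dots> = EE a k I z * (\<integral>t. (indicator {-a..<a} t * ex (k $ j) t) * g (setc j t (vc I z y)) \<partial>lborel)"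
      by (rule integral_mult_right_zero)
    finally show "(\<integral>t. EE a k (insert j I) (z(j := t)) * g (vc (insert j I) (z(j := t)) y) \<partial>lborel)
        = EE a k I z * (\<integral>t. (indicator {-a..<a} t * ex (k $ j) t) * g (setc j t (vc I z y)) \<partial>lborel)" .
  qed
  finally show ?thesis .
qed

lemma int1:
  fixes h :: "real \<Rightarrow> complex"
  assumes c: "continuous_on UNIV h"
  shows "integrable lborel (\<lambda>t. (indicator {-a..<a} t * ex k t) * h t)"
proof (rule integrable_cong_AE_imp)
  have cc: "continuous_on UNIV (\<lambda>t. ex k t * h t)" by (intro continuous_intros ex_cont c)
  show "integrable lborel (\<lambda>t. indicator {-a..a} t *\<^sub>R (ex k t * h t))"
    by (rule borel_integrable_compact[OF compact_Icc]) (rule continuous_on_subset[OF cc], simp)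
  have m: "(\<lambda>t. ex k t * h t) \<in> borel_measurable lborel" using cc by (simp add: borel_measurable_continuous_onI)
  show "(\<lambda>t. (indicator {-a..<a} t * ex k t) * h t) \<in> borel_measurable lborel"
    using m by (simp add: mult.assoc)
  show "AE t in lborel. indicator {-a..a} t *\<^sub>R (ex k t * h t) = (indicator {-a..<a} t * ex k t) * h t"
    using AE_lborel_singleton[of a] by eventually_elim (auto simp: indicator_def)
qed

lemma int_ind_c:
  fixes a :: real
  assumes a: "a > 0"
  shows "(\<integral>t. (indicator {-a..<a} (t::real) :: complex) \<partial>lborel) = complex_of_real (2 * a)"
proof -
  have "(\<integral>t. (indicator {-a..<a} t :: complex) \<partial>lborel) = (\<integral>t. complex_of_real (indicator {-a..<a} t) \<partial>lborel)"
    by (intro Bochner_Integration.integral_cong) (auto simp: indicator_def)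
  also have "\<dots> = complex_of_real (measure lborel {-a..<a})" by simp
  also have "measure lborel {-a..<a} = 2 * a" using a unfolding measure_def by (simp add: emeasure_lborel_Ico)
  finally show ?thesis .
qed

lemma setc_axis: "setc j 0 w + s *\<^sub>R axis j 1 = setc j s w"
  unfolding setc_def by (auto simp: vec_eq_iff axis_def)

lemma setc_setc [simp]: "setc j a (setc j t w) = setc j a w"
  unfolding setc_def by (auto simp: vec_eq_iff)

lemma setc_nth [simp]: "setc j t w $ j = t"
  unfolding setc_def by simp

lemma reflect_setc: "reflect j (setc j t w) = setc j (-t) w"
  unfolding setc_def reflect_def by (auto simp: vec_eq_iff)

lemma ex_neg: "ex k t * ex (-k) t = 1"
  unfolding ex_def by (simp add: exp_add[symmetric])

lemma cont_setc: "continuous_on UNIV (setc j a :: real^'d::finite \<Rightarrow> real^'d)"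
  unfolding setc_def
proof (intro continuous_on_vec_lambda)
  fix i show "continuous_on UNIV (\<lambda>x::real^'d. if i = j then a else x $ i)"
    by (cases "i = j") (auto intro!: continuous_intros)
qed

lemma PP_step:
  fixes g :: "real^'d::finite \<Rightarrow> complex"
  assumes I: "finite I" "j \<notin> I" and a: "a > 0" and kL: "k $ j * (2 * a) \<in> \<int>"
    and d0: "\<And>x. (\<lambda>s. g (x + s *\<^sub>R axis j 1)) differentiable (at 0)"
    and d1: "\<And>x. (\<lambda>s. partials [j] g (x + s *\<^sub>R axis j 1)) differentiable (at 0)"
    and c0: "continuous_on UNIV g" and c1: "continuous_on UNIV (partials [j] g)"
    and c2: "continuous_on UNIV (partials [j, j] g)"
    and b0: "\<And>x. norm (g x) \<le> B" and b1: "\<And>x. norm (partials [j] g x) \<le> B"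
    and b2: "\<And>x. norm (partials [j, j] g x) \<le> B"
    and ev: "\<And>x. g (reflect j x) = g x"
  shows "complex_of_real (1 + 4 * pi^2 * (k $ j)^2) * PP a k (insert j I) g y
       = PP a k (insert j I) (\<lambda>x. g x - partials [j, j] g x) y
         + 2 * ex (k $ j) a * PP a k I (\<lambda>x. partials [j] g (setc j a x)) y"
proof -
  define K where "K = complex_of_real (1 + 4 * pi^2 * (k $ j)^2)"
  define g1 where "g1 x = g x - partials [j, j] g x" for x
  define g2 where "g2 x = partials [j] g (setc j a x)" for x
  define c where "c = 2 * ex (k $ j) a / (2 * a)"
  define G where "G x = c * ex (- (k $ j)) (x $ j) * g2 x" for x
  define inner where "inner h w = (\<integral>t. (indicator {-a..<a} t * ex (k $ j) t) * h (setc j t w) \<partial>lborel)" for h w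
  have cg1: "continuous_on UNIV g1" unfolding g1_def by (intro continuous_intros c0 c2)
  have cg2: "continuous_on UNIV g2" unfolding g2_def
    by (rule continuous_on_compose2[OF c1 cont_setc]) auto
  have cG: "continuous_on UNIV G" unfolding G_def
    by (intro continuous_intros cg2 continuous_on_compose2[OF ex_cont]) auto
  have bg1: "norm (g1 x) \<le> 2 * B" for x
    unfolding g1_def using norm_triangle_ineq4[of "g x" "partials [j, j] g x"] b0[of x] b2[of x] by simp
  have bg2: "norm (g2 x) \<le> B" for x unfolding g2_def by (rule b1)
  have bG: "norm (G x) \<le> norm c * B" for x
    unfolding G_def by (simp add: norm_mult mult_left_mono bg2)
  have cs: "continuous_on UNIV (\<lambda>t. setc j t w)" for w :: "real^'d"
    unfolding setc_def
  proof (intro continuous_on_vec_lambda)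
    fix i show "continuous_on UNIV (\<lambda>x::real. if i = j then x else w $ i)"
      by (cases "i = j") (auto intro!: continuous_intros)
  qed
  have ch: "continuous_on UNIV (\<lambda>t. h (setc j t w))" if "continuous_on UNIV h" for h :: "real^'d \<Rightarrow> complex" and w
    by (rule continuous_on_compose2[OF that cs]) auto
have iG: "inner G w = 2 * ex (k $ j) a * g2 w" for w
  proof -
    have "inner G w = (\<integral>t. (c * g2 w) * (indicator {-a..<a} t :: complex) \<partial>lborel)"
      unfolding inner_def G_def g2_def
    proof (intro Bochner_Integration.integral_cong refl)
      fix t :: real
      have e: "ex (k $ j) t * ex (- (k $ j)) t = 1" by (rule ex_neg)
      have "(indicator {-a..<a} t * ex (k $ j) t) * (c * ex (- (k $ j)) (setc j t w $ j) * partials [j] g (setc j a (setc j t w)))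
          = (ex (k $ j) t * ex (- (k $ j)) t) * ((c * partials [j] g (setc j a w)) * indicator {-a..<a} t)"
        by (simp only: setc_nth setc_setc mult_ac)
      also have "\<dots> = (c * partials [j] g (setc j a w)) * indicator {-a..<a} t" by (simp only: e mult_1_left)
      finally show "(indicator {-a..<a} t * ex (k $ j) t) * (c * ex (- (k $ j)) (setc j t w $ j) * partials [j] g (setc j a (setc j t w)))
          = (c * partials [j] g (setc j a w)) * indicator {-a..<a} t" .
    qed
    also have "\<dots> = (c * g2 w) * (2 * a)" by (simp only: integral_mult_right_zero int_ind_c[OF a] of_real_mult of_real_numeral)
    also have "\<dots> = 2 * ex (k $ j) a * g2 w" unfolding c_def using a by (simp add: field_simps)
    finally show ?thesis .
  qed
  have pw: "K * inner g w = inner (\<lambda>x. g1 x + G x) w" for w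
  proof -
    define x0 where "x0 = setc j 0 w"
    define \<phi> where "\<phi> t = g (setc j t w)" for t
    define \<phi>1 where "\<phi>1 t = partials [j] g (setc j t w)" for t
    define \<phi>2 where "\<phi>2 t = partials [j, j] g (setc j t w)" for t
    have e1: "\<phi> = (\<lambda>s. g (x0 + s *\<^sub>R axis j 1))" unfolding \<phi>_def x0_def setc_axis by simp
    have e2: "\<phi>1 = (\<lambda>s. partials [j] g (x0 + s *\<^sub>R axis j 1))" unfolding \<phi>1_def x0_def setc_axis by simp
    have D1: "(\<phi> has_vector_derivative \<phi>1 t) (at t)" for t
      unfolding e1 using pd_hvd[of g j x0 t, OF d0] unfolding \<phi>1_def x0_def setc_axis by simp
    have D2: "(\<phi>1 has_vector_derivative \<phi>2 t) (at t)" for t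
      unfolding e2 using pd_hvd[of "partials [j] g" j x0 t, OF d1] unfolding \<phi>2_def x0_def setc_axis by simp
    have C2: "continuous_on UNIV \<phi>2" unfolding \<phi>2_def by (rule ch[OF c2])
    have EV: "\<phi> (-t) = \<phi> t" for t unfolding \<phi>_def using ev[of "setc j t w"] by (simp add: reflect_setc)
    have ib: "K * inner g w = inner g1 w + 2 * ex (k $ j) a * g2 w"
      using ibp1[OF a kL D1 D2 C2 EV] unfolding K_def inner_def \<phi>_def \<phi>2_def \<phi>1_def g1_def g2_def by simp
    have "inner (\<lambda>x. g1 x + G x) w = inner g1 w + inner G w"
      unfolding inner_def distrib_left
      by (rule Bochner_Integration.integral_add[OF int1[OF ch[OF cg1]] int1[OF ch[OF cG]]])
    then show ?thesis using ib iG by simp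
  qed
  have cS: "continuous_on UNIV (\<lambda>x. g1 x + G x)" by (intro continuous_intros cg1 cG)
  have bS: "norm (g1 x + G x) \<le> 2 * B + norm c * B" for x
    using norm_triangle_ineq[of "g1 x" "G x"] bg1[of x] bG[of x] by simp
  have "K * PP a k (insert j I) g y = K * (\<integral>z. EE a k I z * inner g (vc I z y) \<partial>(\<Pi>\<^sub>M i\<in>I. lborel))"
    unfolding PP_insert[OF I c0 b0] inner_def ..
  also have "\<dots> = (\<integral>z. EE a k I z * (K * inner g (vc I z y)) \<partial>(\<Pi>\<^sub>M i\<in>I. lborel))"
    by (simp only: integral_mult_right_zero[symmetric] mult.left_commute[of K])
  also have "\<dots> = (\<integral>z. EE a k I z * inner (\<lambda>x. g1 x + G x) (vc I z y) \<partial>(\<Pi>\<^sub>M i\<in>I. lborel))"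
    unfolding pw ..
  also have "\<dots> = PP a k (insert j I) (\<lambda>x. g1 x + G x) y"
    unfolding PP_insert[OF I cS bS] inner_def ..
  also have "\<dots> = PP a k (insert j I) g1 y + PP a k (insert j I) G y"
    unfolding PP_def distrib_left
    by (rule Bochner_Integration.integral_add[OF int_PP[OF _ cg1 bg1] int_PP[OF _ cG bG]]) (use I in auto)
  also have "PP a k (insert j I) G y = 2 * ex (k $ j) a * PP a k I g2 y"
  proof -
    have "PP a k (insert j I) G y = (\<integral>z. EE a k I z * inner G (vc I z y) \<partial>(\<Pi>\<^sub>M i\<in>I. lborel))"
      unfolding PP_insert[OF I cG bG] inner_def ..
    also have "\<dots> = (\<integral>z. (2 * ex (k $ j) a) * (EE a k I z * g2 (vc I z y)) \<partial>(\<Pi>\<^sub>M i\<in>I. lborel))"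
      by (intro Bochner_Integration.integral_cong refl) (simp add: iG mult_ac)
    also have "\<dots> = 2 * ex (k $ j) a * PP a k I g2 y"
      unfolding PP_def by (rule integral_mult_right_zero)
    finally show ?thesis .
  qed
  finally show ?thesis unfolding K_def g1_def g2_def .
qed

definition wt :: "real \<Rightarrow> real" where "wt t = 1 / (1 + t^2)"

lemma wt_pos: "wt t > 0" unfolding wt_def by (simp add: add_pos_nonneg)
lemma wt_le1: "wt t \<le> 1"
proof -
  have p: "1 + t^2 \<ge> 1" by simp
  have q: "0 < 1 + t^2" by (metis add_pos_nonneg zero_less_one zero_le_power2)
  show ?thesis unfolding wt_def using p q by (simp add: divide_le_eq_1)
qed

definition good :: "'d set \<Rightarrow> 'd set \<Rightarrow> (real^'d::finite \<Rightarrow> complex) \<Rightarrow> real \<Rightarrow> bool" where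
  "good R I g M \<longleftrightarrow>
    (\<forall>ls. set ls \<subseteq> R \<longrightarrow> (\<forall>x i. i \<in> R \<longrightarrow> (\<lambda>s. partials ls g (x + s *\<^sub>R axis i 1)) differentiable (at 0))
         \<and> continuous_on UNIV (partials ls g)) \<and>
    (\<forall>i\<in>R. \<forall>x. g (reflect i x) = g x) \<and>
    (\<forall>ls x. set ls \<subseteq> R \<and> (\<forall>i. count_list ls i \<le> 2) \<longrightarrow> norm (partials ls g x) \<le> M * (\<Prod>i\<in>I. wt (x $ i)))"

lemma reflect_add_axis: "l \<noteq> i \<Longrightarrow> reflect i (x + t *\<^sub>R axis l 1) = reflect i x + t *\<^sub>R axis l 1"
  unfolding reflect_def by (auto simp: vec_eq_iff axis_def)

lemma partials_reflect:
  assumes "i \<notin> set ls" "\<And>x. g (reflect i x) = g x"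
  shows "partials ls g (reflect i x) = partials ls g x"
  using assms(1)
proof (induction ls arbitrary: x)
  case Nil then show ?case using assms(2) by simp
next
  case (Cons l ls)
  then have li: "l \<noteq> i" and IH: "\<And>x. partials ls g (reflect i x) = partials ls g x" by auto
  have "(\<lambda>t. partials ls g (reflect i x + t *\<^sub>R axis l 1)) = (\<lambda>t. partials ls g (x + t *\<^sub>R axis l 1))"
    using IH reflect_add_axis[OF li, symmetric] by (simp add: reflect_add_axis[OF li, symmetric])
  then show ?case by (simp add: partial_deriv_def)
qed

lemma setc_add_axis: "l \<noteq> j \<Longrightarrow> setc j a (x + t *\<^sub>R axis l 1) = setc j a x + t *\<^sub>R axis l 1"
  unfolding setc_def by (auto simp: vec_eq_iff axis_def)

lemma partials_setc:
  assumes "j \<notin> set ls"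
  shows "partials ls (\<lambda>x. h (setc j a x)) = (\<lambda>x. partials ls h (setc j a x))"
  using assms
proof (induction ls)
  case Nil then show ?case by simp
next
  case (Cons l ls)
  then have lj: "l \<noteq> j" and IH: "partials ls (\<lambda>x. h (setc j a x)) = (\<lambda>x. partials ls h (setc j a x))" by auto
  show ?case
  proof
    fix x
    have "(\<lambda>t. partials ls h (setc j a (x + t *\<^sub>R axis l 1))) = (\<lambda>t. partials ls h (setc j a x + t *\<^sub>R axis l 1))"
      by (simp add: setc_add_axis[OF lj])
    then show "partials (l # ls) (\<lambda>x. h (setc j a x)) x = partials (l # ls) h (setc j a x)"
      by (simp add: IH partial_deriv_def)
  qed
qed

lemma partials_diff:
  assumes d: "\<And>ls x i. set ls \<subseteq> R \<Longrightarrow> i \<in> R \<Longrightarrow> (\<lambda>s. partials ls g (x + s *\<^sub>R axis i 1)) differentiable (at 0)"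
    and j: "j \<in> R" and ls: "set ls \<subseteq> R"
  shows "partials ls (\<lambda>x. g x - partials [j, j] g x) = (\<lambda>x. partials ls g x - partials (ls @ [j, j]) g x)"
proof -
  define F where "F = (\<lambda>x. g x - partials [j, j] g x)"
  have "partials ls F = (\<lambda>x. partials ls g x - partials (ls @ [j, j]) g x)"
    using ls
  proof (induction ls)
    case Nil then show ?case by (simp add: F_def)
  next
    case (Cons l ls)
    then have l: "l \<in> R" and lsR: "set ls \<subseteq> R" by auto
    have IH: "partials ls F = (\<lambda>x. partials ls g x - partials (ls @ [j, j]) g x)"
      using Cons lsR by auto
    show ?case
    proof
      fix x
      have d1: "(\<lambda>s. partials ls g (x + s *\<^sub>R axis l 1)) differentiable (at 0)" by (rule d[OF lsR l])
      have d2: "(\<lambda>s. partials (ls @ [j, j]) g (x + s *\<^sub>R axis l 1)) differentiable (at 0)" by (rule d) (use lsR j l in auto)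
      have e1: "partials (l # ls) F x = partial_deriv l (partials ls F) x" by simp
      have e2: "partials ((l # ls) @ [j, j]) g x = partial_deriv l (partials (ls @ [j, j]) g) x" by simp
      show "partials (l # ls) F x = partials (l # ls) g x - partials ((l # ls) @ [j, j]) g x"
        unfolding e1 e2 IH partials.simps(2)[of l ls g] partial_deriv_def by (rule vector_derivative_diff_at[OF d1 d2])
    qed
  qed
  then show ?thesis unfolding F_def .
qed

lemma good_M_nonneg: "good R I g M \<Longrightarrow> M \<ge> 0"
proof -
  assume "good R I g M"
  then have b: "\<And>ls x. set ls \<subseteq> R \<Longrightarrow> (\<forall>i. count_list ls i \<le> 2) \<Longrightarrow> norm (partials ls g x) \<le> M * (\<Prod>i\<in>I. wt (x $ i))"
    unfolding good_def by blast
  have "norm (partials [] g 0) \<le> M * (\<Prod>i\<in>I. wt (0 $ i))" by (rule b) auto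
  moreover have "(\<Prod>i\<in>I. wt ((0::real^'a) $ i)) > 0" by (intro prod_pos) (simp add: wt_pos)
  ultimately show ?thesis using norm_ge_zero by (metis dual_order.trans zero_le_mult_iff not_le)
qed

lemma prod_wt_le1: "(\<Prod>i\<in>I. wt (x $ i)) \<le> 1"
  by (intro prod_le_1) (auto simp: wt_le1 less_imp_le[OF wt_pos])

lemma good_bound:
  assumes "good R I g M" "set ls \<subseteq> R" "\<And>i. count_list ls i \<le> 2"
  shows "norm (partials ls g x) \<le> M"
proof -
  have "norm (partials ls g x) \<le> M * (\<Prod>i\<in>I. wt (x $ i))" using assms unfolding good_def by blast
  also have "\<dots> \<le> M * 1" by (intro mult_left_mono prod_wt_le1 good_M_nonneg[OF assms(1)])
  finally show ?thesis by simp
qed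

lemma good1:
  assumes g: "good R I g M" and j: "j \<in> R"
  shows "good (R - {j}) I (\<lambda>x. g x - partials [j, j] g x) (2 * M)"
proof -
  have d: "\<And>ls x i. set ls \<subseteq> R \<Longrightarrow> i \<in> R \<Longrightarrow> (\<lambda>s. partials ls g (x + s *\<^sub>R axis i 1)) differentiable (at 0)"
    and c: "\<And>ls. set ls \<subseteq> R \<Longrightarrow> continuous_on UNIV (partials ls g)"
    and ev: "\<And>i x. i \<in> R \<Longrightarrow> g (reflect i x) = g x"
    and b: "\<And>ls x. set ls \<subseteq> R \<Longrightarrow> (\<forall>i. count_list ls i \<le> 2) \<Longrightarrow> norm (partials ls g x) \<le> M * (\<Prod>i\<in>I. wt (x $ i))"
    using g unfolding good_def by blast+
  have pd: "partials ls (\<lambda>x. g x - partials [j, j] g x) = (\<lambda>x. partials ls g x - partials (ls @ [j, j]) g x)"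
    if "set ls \<subseteq> R - {j}" for ls
    using partials_diff[of R g j ls, OF d j] that by auto
  show ?thesis unfolding good_def
  proof (intro conjI allI impI ballI)
    fix ls x i assume ls: "set ls \<subseteq> R - {j}" and i: "i \<in> R - {j}"
    have ls1: "set ls \<subseteq> R" and ls2: "set (ls @ [j, j]) \<subseteq> R" using ls j by auto
    show "(\<lambda>s. partials ls (\<lambda>x. g x - partials [j, j] g x) (x + s *\<^sub>R axis i 1)) differentiable (at 0)"
      unfolding pd[OF ls] using d[OF ls1, of i x] d[OF ls2, of i x] i by (auto intro!: derivative_intros)
  next
    fix ls assume ls: "set ls \<subseteq> R - {j}"
    have ls1: "set ls \<subseteq> R" and ls2: "set (ls @ [j, j]) \<subseteq> R" using ls j by auto
    show "continuous_on UNIV (partials ls (\<lambda>x. g x - partials [j, j] g x))"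
      unfolding pd[OF ls] by (intro continuous_intros c ls1 ls2)
  next
    fix i x assume i: "i \<in> R - {j}"
    have "partials [j, j] g (reflect i x) = partials [j, j] g x"
      by (rule partials_reflect) (use i ev in auto)
    then show "g (reflect i x) - partials [j, j] g (reflect i x) = g x - partials [j, j] g x"
      using ev[of i x] i by simp
  next
    fix ls x assume a: "set ls \<subseteq> R - {j} \<and> (\<forall>i. count_list ls i \<le> 2)"
    then have ls: "set ls \<subseteq> R - {j}" and cnt: "\<forall>i. count_list ls i \<le> 2" by auto
    have ls1: "set ls \<subseteq> R" and ls2: "set (ls @ [j, j]) \<subseteq> R" using ls j by auto
    have jn: "count_list ls j = 0" using ls by (simp add: count_list_0_iff subset_iff) blast
    have cnt2: "\<forall>i. count_list (ls @ [j, j]) i \<le> 2" using cnt jn by auto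
    have "norm (partials ls g x - partials (ls @ [j, j]) g x) \<le> norm (partials ls g x) + norm (partials (ls @ [j, j]) g x)"
      by (rule norm_triangle_ineq4)
    also have "\<dots> \<le> M * (\<Prod>i\<in>I. wt (x $ i)) + M * (\<Prod>i\<in>I. wt (x $ i))"
      by (intro add_mono b ls1 ls2 cnt cnt2)
    finally show "norm (partials ls (\<lambda>x. g x - partials [j, j] g x) x) \<le> 2 * M * (\<Prod>i\<in>I. wt (x $ i))"
      unfolding pd[OF ls] by simp
  qed
qed

lemma good2:
  assumes g: "good R I g M" and j: "j \<in> R" "j \<in> I" and I: "finite I"
  shows "good (R - {j}) (I - {j}) (\<lambda>x. partials [j] g (setc j a x)) M"
proof -
  have d: "\<And>ls x i. set ls \<subseteq> R \<Longrightarrow> i \<in> R \<Longrightarrow> (\<lambda>s. partials ls g (x + s *\<^sub>R axis i 1)) differentiable (at 0)"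
    and c: "\<And>ls. set ls \<subseteq> R \<Longrightarrow> continuous_on UNIV (partials ls g)"
    and ev: "\<And>i x. i \<in> R \<Longrightarrow> g (reflect i x) = g x"
    and b: "\<And>ls x. set ls \<subseteq> R \<Longrightarrow> (\<forall>i. count_list ls i \<le> 2) \<Longrightarrow> norm (partials ls g x) \<le> M * (\<Prod>i\<in>I. wt (x $ i))"
    using g unfolding good_def by blast+
  have M0: "M \<ge> 0" by (rule good_M_nonneg[OF g])
  have ps: "partials ls (\<lambda>x. partials [j] g (setc j a x)) = (\<lambda>x. partials (ls @ [j]) g (setc j a x))"
    if "set ls \<subseteq> R - {j}" for ls
  proof -
    have "j \<notin> set ls" using that by auto
    from partials_setc[OF this, of "partials [j] g" a] show ?thesis by (simp add: partials_append)
  qed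
  show ?thesis unfolding good_def
  proof (intro conjI allI impI ballI)
    fix ls x i assume ls: "set ls \<subseteq> R - {j}" and i: "i \<in> R - {j}"
    have ls2: "set (ls @ [j]) \<subseteq> R" using ls j by auto
    show "(\<lambda>s. partials ls (\<lambda>x. partials [j] g (setc j a x)) (x + s *\<^sub>R axis i 1)) differentiable (at 0)"
    proof -
      have "(\<lambda>s. partials (ls @ [j]) g (setc j a (x + s *\<^sub>R axis i 1))) = (\<lambda>s. partials (ls @ [j]) g (setc j a x + s *\<^sub>R axis i 1))"
        using i by (simp add: setc_add_axis)
      then show "(\<lambda>s. partials ls (\<lambda>x. partials [j] g (setc j a x)) (x + s *\<^sub>R axis i 1)) differentiable (at 0)"
        unfolding ps[OF ls] using d[OF ls2, of i "setc j a x"] i by simp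
    qed
  next
    fix ls assume ls: "set ls \<subseteq> R - {j}"
    have ls2: "set (ls @ [j]) \<subseteq> R" using ls j by auto
    show "continuous_on UNIV (partials ls (\<lambda>x. partials [j] g (setc j a x)))"
      unfolding ps[OF ls] by (rule continuous_on_compose2[OF c[OF ls2] cont_setc]) auto
  next
    fix i x assume i: "i \<in> R - {j}"
    have "setc j a (reflect i x) = reflect i (setc j a x)"
      using i unfolding setc_def reflect_def by (auto simp: vec_eq_iff)
    moreover have "partials [j] g (reflect i y) = partials [j] g y" for y
      by (rule partials_reflect) (use i ev in auto)
    ultimately show "partials [j] g (setc j a (reflect i x)) = partials [j] g (setc j a x)" by simp
  next
    fix ls x assume a: "set ls \<subseteq> R - {j} \<and> (\<forall>i. count_list ls i \<le> 2)"
    then have ls: "set ls \<subseteq> R - {j}" and cnt: "\<forall>i. count_list ls i \<le> 2" by auto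
    have ls2: "set (ls @ [j]) \<subseteq> R" using ls j by auto
    have jn: "count_list ls j = 0" using ls by (simp add: count_list_0_iff subset_iff) blast
    have cnt2: "\<forall>i. count_list (ls @ [j]) i \<le> 2" using cnt jn by auto
    have "norm (partials (ls @ [j]) g (setc j a x)) \<le> M * (\<Prod>i\<in>I. wt (setc j a x $ i))"
      by (rule b[OF ls2 cnt2])
    also have "(\<Prod>i\<in>I. wt (setc j a x $ i)) = wt a * (\<Prod>i\<in>I - {j}. wt (x $ i))"
    proof -
      have "(\<Prod>i\<in>I. wt (setc j a x $ i)) = wt (setc j a x $ j) * (\<Prod>i\<in>I - {j}. wt (setc j a x $ i))"
        using I j by (simp add: prod.remove)
      also have "(\<Prod>i\<in>I - {j}. wt (setc j a x $ i)) = (\<Prod>i\<in>I - {j}. wt (x $ i))"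
        by (intro prod.cong) (auto simp: setc_def)
      finally show ?thesis by simp
    qed
    also have "M * (wt a * (\<Prod>i\<in>I - {j}. wt (x $ i))) \<le> M * (1 * (\<Prod>i\<in>I - {j}. wt (x $ i)))"
      by (intro mult_left_mono M0 mult_right_mono wt_le1 prod_nonneg) (auto intro: less_imp_le wt_pos)
    finally show "norm (partials ls (\<lambda>x. partials [j] g (setc j a x)) x) \<le> M * (\<Prod>i\<in>I - {j}. wt (x $ i))"
      unfolding ps[OF ls] by simp
  qed
qed

lemma nz1: "1 + t^2 \<noteq> (0::real)"
  by (metis add_pos_nonneg zero_less_one zero_le_power2 less_irrefl)

lemma wt_cont: "continuous_on S wt"
  unfolding wt_def by (intro continuous_intros) (simp add: nz1)

lemma int_wt: "integrable lborel (\<lambda>t::real. indicator {-a..<a} t * wt t)"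
proof (rule Bochner_Integration.integrable_bound[OF int_Ico])
  show "(\<lambda>t. indicator {-a..<a} t * wt t) \<in> borel_measurable lborel"
    using borel_measurable_continuous_onI[OF wt_cont] by measurable
  show "AE t in lborel. norm (indicator {-a..<a} t * wt t) \<le> norm (indicator {-a..<a} t :: real)"
    using wt_le1 wt_pos by (intro AE_I2) (auto simp: indicator_def abs_of_pos)
qed

lemma int_wt_le: assumes a: "a > 0" shows "(\<integral>t. indicator {-a..<a} t * wt t \<partial>lborel) \<le> pi"
proof -
  have "(\<integral>t. indicator {-a..<a} t * wt t \<partial>lborel) \<le> (\<integral>t. indicator {-a..a} t *\<^sub>R wt t \<partial>lborel)"
  proof (rule integral_mono')
    show "integrable lborel (\<lambda>t. indicator {-a..a} t *\<^sub>R wt t)"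
      by (rule borel_integrable_compact[OF compact_Icc wt_cont])
    show "indicator {-a..<a} t * wt t \<le> indicator {-a..a} t *\<^sub>R wt t" for t
      using wt_pos[of t] by (auto simp: indicator_def)
    show "0 \<le> indicator {-a..a} t *\<^sub>R wt t" for t
      using wt_pos[of t] by (auto simp: indicator_def)
  qed
  also have "\<dots> = arctan a - arctan (-a)"
  proof (rule integral_FTC_atLeastAtMost)
    show "-a \<le> a" using a by simp
    show "continuous_on {-a..a} wt" by (rule wt_cont)
    fix x
    have "(arctan has_real_derivative wt x) (at x)"
      unfolding wt_def using DERIV_arctan[of x] by (simp add: power2_eq_square inverse_eq_divide)
    then show "(arctan has_vector_derivative wt x) (at x within {-a..a})"
      by (simp add: has_real_derivative_iff_has_vector_derivative has_vector_derivative_at_within)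
  qed
  also have "\<dots> = 2 * arctan a" by (simp add: arctan_minus)
  also have "\<dots> \<le> pi" using arctan_ubound[of a] by simp
  finally show ?thesis .
qed

lemma PP_base:
  fixes g :: "real^'d::finite \<Rightarrow> complex"
  assumes a: "a > 0" and c: "continuous_on UNIV g"
    and b: "\<And>x. norm (g x) \<le> M * (\<Prod>i\<in>I. wt (x $ i))" and M0: "M \<ge> 0"
  shows "norm (PP a k I g y) \<le> pi ^ card I * M"
proof -
  have I: "finite I" by simp
  interpret finite_product_sigma_finite "\<lambda>_::'d. lborel :: real measure" I by standard (simp add: I)
  have bB: "norm (g x) \<le> M" for x
    using b[of x] mult_left_mono[OF prod_wt_le1[where I=I and x=x] M0] by simp
  have "norm (PP a k I g y) \<le> (\<integral>z. norm (EE a k I z * g (vc I z y)) \<partial>(\<Pi>\<^sub>M i\<in>I. lborel))"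
    unfolding PP_def by (rule integral_norm_bound)
  also have "\<dots> \<le> (\<integral>z. M * (\<Prod>i\<in>I. indicator {-a..<a} (z i) * wt (z i)) \<partial>(\<Pi>\<^sub>M i\<in>I. lborel))"
  proof (rule integral_mono')
    show "integrable (\<Pi>\<^sub>M i\<in>I. lborel) (\<lambda>z. M * (\<Prod>i\<in>I. indicator {-a..<a} (z i) * wt (z i)))"
      by (intro integrable_mult_right product_integrable_prod I int_wt)
    fix z
    have vz: "(\<Prod>i\<in>I. wt (vc I z y $ i)) = (\<Prod>i\<in>I. wt (z i))"
      by (intro prod.cong) (auto simp: vc_def)
    have p0: "0 \<le> (\<Prod>i\<in>I. indicator {-a..<a} (z i) :: real)" by (intro prod_nonneg) auto
    have "norm (EE a k I z * g (vc I z y)) = (\<Prod>i\<in>I. indicator {-a..<a} (z i)) * norm (g (vc I z y))"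
      by (simp add: norm_mult norm_EE)
    also have "\<dots> \<le> (\<Prod>i\<in>I. indicator {-a..<a} (z i)) * (M * (\<Prod>i\<in>I. wt (z i)))"
      using b[of "vc I z y"] unfolding vz by (intro mult_left_mono p0)
    also have "\<dots> = M * (\<Prod>i\<in>I. indicator {-a..<a} (z i) * wt (z i))"
      by (simp add: prod.distrib)
    finally show "norm (EE a k I z * g (vc I z y)) \<le> M * (\<Prod>i\<in>I. indicator {-a..<a} (z i) * wt (z i))" .
    show "0 \<le> M * (\<Prod>i\<in>I. indicator {-a..<a} (z i) * wt (z i))"
      using M0 wt_pos by (intro mult_nonneg_nonneg prod_nonneg) (auto simp: less_imp_le)
  qed
  also have "\<dots> = M * (\<Prod>i\<in>I. (\<integral>t. indicator {-a..<a} t * wt t \<partial>lborel))"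
    by (simp add: product_integral_prod[OF I int_wt])
  also have "\<dots> \<le> M * (\<Prod>i\<in>I. pi)"
    by (intro mult_left_mono M0 prod_mono conjI int_wt_le[OF a] integral_nonneg) (auto simp: wt_pos less_imp_le)
  finally show ?thesis by (simp add: mult.commute)
qed

lemma claim:
  fixes k :: "real^'d::finite"
  assumes a: "a > 0" and kL: "\<And>i. k $ i * (2 * a) \<in> \<int>"
  shows "R \<subseteq> I \<Longrightarrow> good R I g M \<Longrightarrow>
     (\<Prod>i\<in>R. (1 + 4 * pi^2 * (k $ i)^2)) * norm (PP a k I g y) \<le> 4 ^ card R * pi ^ card I * M"
proof (induction R arbitrary: I g M y rule: finite_induct[OF finite])
  case 1
  have c: "continuous_on UNIV g" and b: "\<And>x. norm (g x) \<le> M * (\<Prod>i\<in>I. wt (x $ i))"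
    using "1.prems"(2) unfolding good_def by (fastforce, fastforce)
  show ?case using PP_base[OF a c b good_M_nonneg[OF "1.prems"(2)]] by simp
next
  case (2 j R)
  note jR = "2.hyps"(2)
  have RI: "R \<subseteq> I" and jI: "j \<in> I" using "2.prems"(1) by auto
  note g = "2.prems"(2)
  define I' where "I' = I - {j}"
  have II': "I = insert j I'" and jI': "j \<notin> I'" using jI unfolding I'_def by auto
  have M0: "M \<ge> 0" by (rule good_M_nonneg[OF g])
  have d: "\<And>ls x i. set ls \<subseteq> insert j R \<Longrightarrow> i \<in> insert j R \<Longrightarrow> (\<lambda>s. partials ls g (x + s *\<^sub>R axis i 1)) differentiable (at 0)"
    and c: "\<And>ls. set ls \<subseteq> insert j R \<Longrightarrow> continuous_on UNIV (partials ls g)"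
    and ev: "\<And>i x. i \<in> insert j R \<Longrightarrow> g (reflect i x) = g x"
    using g unfolding good_def by blast+
  have bnd: "norm (partials ls g x) \<le> M" if "set ls \<subseteq> insert j R" "\<And>i. count_list ls i \<le> 2" for ls x
    by (rule good_bound[OF g that])
  define g1 where "g1 x = g x - partials [j, j] g x" for x
  define g2 where "g2 x = partials [j] g (setc j a x)" for x
  have step: "complex_of_real (1 + 4 * pi^2 * (k $ j)^2) * PP a k I g y
       = PP a k I g1 y + 2 * ex (k $ j) a * PP a k I' g2 y"
    unfolding II' g1_def g2_def
  proof (rule PP_step[OF finite jI' a kL])
    show "(\<lambda>s. g (x + s *\<^sub>R axis j 1)) differentiable (at 0)" for x using d[of "[]" j x] by simp
    show "(\<lambda>s. partials [j] g (x + s *\<^sub>R axis j 1)) differentiable (at 0)" for x using d[of "[j]" j x] by simp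
    show "continuous_on UNIV g" using c[of "[]"] by simp
    show "continuous_on UNIV (partials [j] g)" using c[of "[j]"] by simp
    show "continuous_on UNIV (partials [j, j] g)" using c[of "[j, j]"] by simp
    show "norm (g x) \<le> M" for x using bnd[of "[]" x] by simp
    show "norm (partials [j] g x) \<le> M" for x using bnd[of "[j]" x] by simp
    show "norm (partials [j, j] g x) \<le> M" for x using bnd[of "[j, j]" x] by simp
    show "g (reflect j x) = g x" for x using ev[of j x] by simp
  qed
  have g1: "good R I g1 (2 * M)"
    using good1[OF g, of j] jR unfolding g1_def by simp
  have g2: "good R I' g2 M"
    using good2[OF g _ jI finite, of a] jR unfolding g2_def I'_def by simp
  have RI': "R \<subseteq> I'" using RI jR unfolding I'_def by auto
  have IH1: "(\<Prod>i\<in>R. (1 + 4 * pi^2 * (k $ i)^2)) * norm (PP a k I g1 y) \<le> 4 ^ card R * pi ^ card I * (2 * M)"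
    by (rule "2.IH"[OF RI g1])
  have IH2: "(\<Prod>i\<in>R. (1 + 4 * pi^2 * (k $ i)^2)) * norm (PP a k I' g2 y) \<le> 4 ^ card R * pi ^ card I' * M"
    by (rule "2.IH"[OF RI' g2])
  define P where "P = (\<Prod>i\<in>R. (1 + 4 * pi^2 * (k $ i)^2))"
  have P0: "P \<ge> 0" unfolding P_def by (intro prod_nonneg) (auto intro: add_nonneg_nonneg)
  have Kj: "1 + 4 * pi^2 * (k $ j)^2 \<ge> (0::real)" by (intro add_nonneg_nonneg) auto
  have cI: "card I = Suc (card I')" using jI' unfolding II' by simp
  have pile: "pi ^ card I' \<le> pi ^ card I" unfolding cI by (intro power_increasing) (auto simp: pi_ge_two order_trans[OF _ pi_ge_two])
  have "(\<Prod>i\<in>insert j R. (1 + 4 * pi^2 * (k $ i)^2)) * norm (PP a k I g y)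
      = P * norm (complex_of_real (1 + 4 * pi^2 * (k $ j)^2) * PP a k I g y)"
  proof -
    have nK: "norm (complex_of_real (1 + 4 * pi^2 * (k $ j)^2)) = 1 + 4 * pi^2 * (k $ j)^2"
      using Kj by (simp only: norm_of_real abs_of_nonneg)
    have pe: "(\<Prod>i\<in>insert j R. (1 + 4 * pi^2 * (k $ i)^2)) = (1 + 4 * pi^2 * (k $ j)^2) * P"
      unfolding P_def using jR "2.hyps"(1) by simp
    show ?thesis unfolding pe norm_mult nK by (simp only: mult_ac)
  qed
  also have "\<dots> = P * norm (PP a k I g1 y + 2 * ex (k $ j) a * PP a k I' g2 y)" unfolding step ..
  also have "\<dots> \<le> P * (norm (PP a k I g1 y) + 2 * norm (PP a k I' g2 y))"
    by (intro mult_left_mono P0) (auto intro: order_trans[OF norm_triangle_ineq] simp: norm_mult)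
  also have "\<dots> = P * norm (PP a k I g1 y) + 2 * (P * norm (PP a k I' g2 y))" by (simp add: algebra_simps)
  also have "\<dots> \<le> 4 ^ card R * pi ^ card I * (2 * M) + 2 * (4 ^ card R * pi ^ card I' * M)"
    using IH1 IH2 unfolding P_def by linarith
  also have "\<dots> \<le> 4 ^ card R * pi ^ card I * (2 * M) + 2 * (4 ^ card R * pi ^ card I * M)"
    by (intro add_left_mono mult_left_mono mult_right_mono pile M0) auto
  also have "\<dots> = 4 ^ card (insert j R) * pi ^ card I * M"
    using jR "2.hyps"(1) by simp
  finally show ?case .
qed

definition vecof :: "('d::finite \<Rightarrow> real) \<Rightarrow> real^'d" where "vecof z = (\<chi> i. z i)"

lemma vecof_meas: "vecof \<in> (\<Pi>\<^sub>M i\<in>(UNIV::'d::finite set). lborel) \<rightarrow>\<^sub>M borel"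
  unfolding vecof_def by (intro measurable_vec) (simp add: measurable_component_singleton)

lemma Basis_vec_eq: "(Basis :: (real^'d::finite) set) = (\<lambda>i. axis i 1) ` UNIV"
  using axis_inverse by (auto simp: Basis_vec_def)

lemma prod_Basis_vec: "(\<Prod>b\<in>(Basis :: (real^'d::finite) set). F b) = (\<Prod>i\<in>UNIV. F (axis i 1))"
proof -
  have "inj_on (\<lambda>i::'d. axis i (1::real)) UNIV" by (auto simp: inj_on_def axis_eq_axis)
  then show ?thesis unfolding Basis_vec_eq by (simp add: prod.reindex)
qed

lemma lborel_vec: "(lborel :: (real^'d::finite) measure) = distr (\<Pi>\<^sub>M i\<in>(UNIV::'d set). lborel) borel vecof"
proof (rule lborel_eqI)
  interpret finite_product_sigma_finite "\<lambda>_::'d. lborel :: real measure" UNIV by standard simp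
  fix l u :: "real^'d"
  assume le: "\<And>b. b \<in> Basis \<Longrightarrow> l \<bullet> b \<le> u \<bullet> b"
  have le': "l $ i \<le> u $ i" for i using le[of "axis i 1"] by (simp add: inner_axis)
  have pre: "vecof -` box l u \<inter> space (\<Pi>\<^sub>M i\<in>(UNIV::'d set). lborel) = (\<Pi>\<^sub>E i\<in>UNIV. {l $ i <..< u $ i})"
    by (auto simp: space_PiM vecof_def mem_box_cart PiE_iff extensional_def)
  have "emeasure (distr (\<Pi>\<^sub>M i\<in>(UNIV::'d set). lborel) borel vecof) (box l u)
      = emeasure (\<Pi>\<^sub>M i\<in>(UNIV::'d set). lborel) (\<Pi>\<^sub>E i\<in>UNIV. {l $ i <..< u $ i})"
    by (subst emeasure_distr[OF vecof_meas]) (auto simp: pre)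
  also have "\<dots> = (\<Prod>i\<in>UNIV. emeasure lborel {l $ i <..< u $ i})"
    by (rule emeasure_PiM) auto
  also have "\<dots> = (\<Prod>i\<in>UNIV. ennreal (u $ i - l $ i))"
    using le' by (intro prod.cong) auto
  also have "\<dots> = ennreal (\<Prod>i\<in>UNIV. (u $ i - l $ i))"
    using le' by (intro prod_ennreal) auto
  also have "(\<Prod>i\<in>UNIV. (u $ i - l $ i)) = (\<Prod>b\<in>Basis. (u - l) \<bullet> b)"
    unfolding prod_Basis_vec by (simp add: inner_axis)
  finally show "emeasure (distr (\<Pi>\<^sub>M i\<in>(UNIV::'d set). lborel) borel vecof) (box l u) = (\<Prod>b\<in>Basis. (u - l) \<bullet> b)" .
next
  show "sets (distr (\<Pi>\<^sub>M i\<in>(UNIV::'d set). lborel) borel vecof) = sets borel" by simp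
qed

lemma of_real_indicator': "complex_of_real (indicator S t) = indicator S t"
  by (simp add: indicator_def)

lemma ind_torus: "indicator (torus_box L) x = (\<Prod>j\<in>UNIV. indicator {-(L/2)..<L/2} (x $ j) :: real)"
  unfolding torus_box_def by (auto simp: indicator_def)

lemma fourier_PP:
  fixes f :: "real^'d::finite \<Rightarrow> complex"
  assumes c: "continuous_on UNIV f"
  shows "fourier_box L f k = PP (L/2) k UNIV f y"
proof -
  have fm: "f \<in> borel_measurable borel" by (rule borel_measurable_continuous_onI[OF c])
  have cm: "(\<lambda>x::real^'d. x $ j) \<in> borel_measurable borel" for j
    by (intro borel_measurable_continuous_onI continuous_intros)
  have hm: "(\<lambda>x::real^'d. indicator (torus_box L) x *\<^sub>R (exp (- (2 * pi * \<i> * complex_of_real (k \<bullet> x))) * f x)) \<in> borel_measurable borel"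
    unfolding ind_torus using fm cm by measurable
  have "fourier_box L f k = (\<integral>x. indicator (torus_box L) x *\<^sub>R (exp (- (2 * pi * \<i> * complex_of_real (k \<bullet> x))) * f x) \<partial>lborel)"
    unfolding fourier_box_def set_lebesgue_integral_def ..
  also have "\<dots> = (\<integral>z. indicator (torus_box L) (vecof z) *\<^sub>R (exp (- (2 * pi * \<i> * complex_of_real (k \<bullet> vecof z))) * f (vecof z)) \<partial>(\<Pi>\<^sub>M i\<in>(UNIV::'d set). lborel))"
    by (subst lborel_vec) (rule integral_distr[OF vecof_meas hm])
  also have "\<dots> = PP (L/2) k UNIV f y"
    unfolding PP_def
  proof (intro Bochner_Integration.integral_cong refl)
    fix z :: "'d \<Rightarrow> real"
    have v: "vc UNIV z y = vecof z" unfolding vc_def vecof_def by simp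
    have e: "exp (- (2 * pi * \<i> * complex_of_real (k \<bullet> vecof z))) = (\<Prod>i\<in>UNIV. ex (k $ i) (z i))"
      unfolding ex_def inner_vec_def vecof_def
      by (simp add: exp_sum[symmetric] sum_negf[symmetric] sum_distrib_left)
    show "indicator (torus_box L) (vecof z) *\<^sub>R (exp (- (2 * pi * \<i> * complex_of_real (k \<bullet> vecof z))) * f (vecof z))
        = EE (L/2) k UNIV z * f (vc UNIV z y)"
      unfolding v e EE_def ind_torus prod.distrib by (simp add: vecof_def scaleR_conv_of_real of_real_prod of_real_indicator')
  qed
  finally show ?thesis .
qed

lemma schwartz_smooth: "schwartz f \<Longrightarrow> smooth f"
  unfolding schwartz_def smooth_def by blast

lemma jbr_pow: "jbr x ^ (2 * n) = (1 + norm x ^ 2) ^ n"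
  unfolding jbr_def by (simp add: power_mult)

lemma pow_bound: "(1 + r^2) ^ n \<le> (2::real) ^ n * (1 + r ^ (2 * n))" if r: "r \<ge> 0"
proof (cases "r \<le> 1")
  case True
  have "(1 + r^2) ^ n \<le> 2 ^ n" using True r by (intro power_mono) (auto simp: power_le_one)
  also have "\<dots> \<le> 2 ^ n * (1 + r ^ (2 * n))" using r by simp
  finally show ?thesis .
next
  case False
  have "1 + r^2 \<le> 2 * r^2" using False by (simp add: power2_eq_square) (metis less_eq_real_def mult_le_cancel_left1 not_le order_less_le_trans zero_less_one)
  then have "(1 + r^2) ^ n \<le> (2 * r^2) ^ n" by (intro power_mono) auto
  also have "\<dots> = 2 ^ n * r ^ (2 * n)" by (simp add: power_mult_distrib power_mult)
  also have "\<dots> \<le> 2 ^ n * (1 + r ^ (2 * n))" by simp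
  finally show ?thesis .
qed

lemma schwartz_sup_bdd:
  fixes f :: "real^'d::finite \<Rightarrow> complex"
  assumes s: "schwartz f"
  shows "bdd_above (range (\<lambda>x. \<bar>jbr x ^ (2 * CARD('d))\<bar> * cmod (partials js f x)))"
proof -
  obtain B0 where B0: "\<And>x. norm x ^ 0 * cmod (partials js f x) \<le> B0" using s unfolding schwartz_def by blast
  obtain B1 where B1: "\<And>x. norm x ^ (2 * CARD('d)) * cmod (partials js f x) \<le> B1" using s unfolding schwartz_def by blast
  show ?thesis
  proof (rule bdd_aboveI2)
    fix x :: "real^'d"
    have j0: "jbr x ^ (2 * CARD('d)) \<ge> 0" unfolding jbr_def by simp
    have "\<bar>jbr x ^ (2 * CARD('d))\<bar> * cmod (partials js f x) = (1 + norm x ^ 2) ^ CARD('d) * cmod (partials js f x)"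
      using j0 by (simp add: jbr_pow)
    also have "\<dots> \<le> 2 ^ CARD('d) * (1 + norm x ^ (2 * CARD('d))) * cmod (partials js f x)"
      by (intro mult_right_mono pow_bound) auto
    also have "\<dots> = 2 ^ CARD('d) * (norm x ^ 0 * cmod (partials js f x) + norm x ^ (2 * CARD('d)) * cmod (partials js f x))"
      by (simp add: algebra_simps)
    also have "\<dots> \<le> 2 ^ CARD('d) * (B0 + B1)" by (intro mult_left_mono add_mono B0 B1) auto
    finally show "\<bar>jbr x ^ (2 * CARD('d))\<bar> * cmod (partials js f x) \<le> 2 ^ CARD('d) * (B0 + B1)" .
  qed
qed

lemma finite_alphas: "finite {\<alpha>::'d::finite \<Rightarrow> nat. \<forall>j. \<alpha> j \<le> 2}"
proof -
  have "{\<alpha>::'d \<Rightarrow> nat. \<forall>j. \<alpha> j \<le> 2} = PiE UNIV (\<lambda>_. {..2})" by (auto simp: PiE_iff)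
  then show ?thesis by (simp add: finite_PiE)
qed

lemma seminorm_ge:
  fixes f :: "real^'d::finite \<Rightarrow> complex"
  assumes s: "schwartz f" and \<alpha>: "\<forall>j. \<alpha> j \<le> 2"
  shows "\<bar>jbr x ^ (2 * CARD('d))\<bar> * cmod (dmulti \<alpha> f x) \<le> schwartz_seminorm f"
    and "schwartz_seminorm f \<ge> 0"
proof -
  define T where "T \<beta> = (SUP x. \<bar>jbr x ^ (2 * CARD('d))\<bar> * cmod (dmulti \<beta> f x))" for \<beta>
  have bdd: "bdd_above (range (\<lambda>x. \<bar>jbr x ^ (2 * CARD('d))\<bar> * cmod (dmulti \<beta> f x)))" for \<beta>
    unfolding dmulti_def by (rule schwartz_sup_bdd[OF s])
  have T0: "T \<beta> \<ge> 0" for \<beta>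
    unfolding T_def by (rule cSUP_upper2[OF bdd[of \<beta>], of 0]) auto
  have "\<bar>jbr x ^ (2 * CARD('d))\<bar> * cmod (dmulti \<alpha> f x) \<le> T \<alpha>"
    unfolding T_def by (rule cSUP_upper[OF _ bdd]) simp
  also have "T \<alpha> \<le> (\<Sum>\<beta>\<in>{\<alpha>::'d \<Rightarrow> nat. \<forall>j. \<alpha> j \<le> 2}. T \<beta>)"
    by (rule member_le_sum) (use \<alpha> finite_alphas T0 in auto)
  finally show "\<bar>jbr x ^ (2 * CARD('d))\<bar> * cmod (dmulti \<alpha> f x) \<le> schwartz_seminorm f"
    unfolding schwartz_seminorm_def T_def .
  show "schwartz_seminorm f \<ge> 0"
    unfolding schwartz_seminorm_def using T0 unfolding T_def by (intro sum_nonneg) auto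
qed

lemma prod_wt_ge:
  fixes x :: "real^'d::finite"
  shows "1 / jbr x ^ (2 * CARD('d)) \<le> (\<Prod>i\<in>UNIV. wt (x $ i))"
proof -
  have pos: "0 < (\<Prod>i\<in>UNIV. 1 + (x $ i)^2)" by (intro prod_pos) (simp add: add_pos_nonneg)
  have "(\<Prod>i\<in>UNIV. 1 + (x $ i)^2) \<le> (\<Prod>i\<in>(UNIV::'d set). 1 + norm x ^ 2)"
  proof (intro prod_mono conjI)
    fix i
    have "\<bar>x $ i\<bar> \<le> norm x" by (rule component_le_norm_cart)
    then have "(x $ i)^2 \<le> (norm x)^2" by (metis abs_le_square_iff abs_norm_cancel)
    then show "1 + (x $ i)^2 \<le> 1 + norm x ^ 2" by simp
  qed (simp add: add_nonneg_nonneg)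
  also have "\<dots> = jbr x ^ (2 * CARD('d))" by (simp add: jbr_pow)
  finally have le: "(\<Prod>i\<in>UNIV. 1 + (x $ i)^2) \<le> jbr x ^ (2 * CARD('d))" .
  have "(\<Prod>i\<in>UNIV. wt (x $ i)) = 1 / (\<Prod>i\<in>UNIV. 1 + (x $ i)^2)"
    unfolding wt_def by (simp add: prod_dividef)
  moreover have "1 / jbr x ^ (2 * CARD('d)) \<le> 1 / (\<Prod>i\<in>UNIV. 1 + (x $ i)^2)"
  proof (rule divide_left_mono[OF le])
    have "jbr x > 0" unfolding jbr_def by (simp add: add_pos_nonneg)
    then show "0 < jbr x ^ (2 * CARD('d)) * (\<Prod>i\<in>UNIV. 1 + (x $ i)^2)" using pos by simp
  qed simp
  ultimately show ?thesis by simp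
qed

lemma schwartz_good:
  fixes f :: "real^'d::finite \<Rightarrow> complex"
  assumes s: "schwartz f" and ev: "\<And>j x. f (reflect j x) = f x"
  shows "good UNIV UNIV f (schwartz_seminorm f)"
  unfolding good_def
proof (intro conjI allI impI ballI)
  fix ls :: "'d list" and x :: "real^'d" and i :: 'd
  show "(\<lambda>s. partials ls f (x + s *\<^sub>R axis i 1)) differentiable (at 0)" using s unfolding schwartz_def by blast
next
  fix ls :: "'d list" show "continuous_on UNIV (partials ls f)" using s unfolding schwartz_def by blast
next
  fix i :: 'd and x :: "real^'d" show "f (reflect i x) = f x" by (rule ev)
next
  fix ls :: "'d list" and x :: "real^'d" assume "set ls \<subseteq> UNIV \<and> (\<forall>i. count_list ls i \<le> 2)"
  then have cnt: "\<forall>i. count_list ls i \<le> 2" by blast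
  define \<alpha> where "\<alpha> = count_list ls"
  have pe: "partials ls f = dmulti \<alpha> f"
    by (rule dmulti_eq[OF schwartz_smooth[OF s], symmetric]) (simp add: \<alpha>_def)
  define J where "J = jbr x ^ (2 * CARD('d))"
  have J: "J > 0" unfolding J_def jbr_def by (simp add: add_pos_nonneg)
  have S0: "schwartz_seminorm f \<ge> 0" by (rule seminorm_ge(2)[OF s cnt])
  have "J * cmod (dmulti \<alpha> f x) \<le> schwartz_seminorm f"
    using seminorm_ge(1)[OF s, of \<alpha> x] cnt J unfolding \<alpha>_def J_def by simp
  then have "cmod (dmulti \<alpha> f x) \<le> schwartz_seminorm f * (1 / J)"
    using J by (simp add: field_simps)
  also have "\<dots> \<le> schwartz_seminorm f * (\<Prod>i\<in>UNIV. wt (x $ i))"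
    unfolding J_def by (intro mult_left_mono prod_wt_ge S0)
  finally show "cmod (partials ls f x) \<le> schwartz_seminorm f * (\<Prod>i\<in>UNIV. wt (x $ i))" unfolding pe .
qed

lemma wt_term:
  fixes c L :: real
  assumes L: "L \<ge> 1"
  shows "wt (c / L) \<le> 2 * L * (arctan ((c + 1/2) / L) - arctan ((c - 1/2) / L))"
proof -
  have Lp: "L > 0" using L by simp
  have lt: "(c - 1/2) / L < (c + 1/2) / L" using Lp by (simp add: divide_strict_right_mono)
  obtain \<xi> where \<xi>: "(c - 1/2) / L < \<xi>" "\<xi> < (c + 1/2) / L"
    "arctan ((c + 1/2) / L) - arctan ((c - 1/2) / L) = ((c + 1/2) / L - (c - 1/2) / L) * (1 / (1 + \<xi>^2))"
    using MVT2[OF lt, of arctan "\<lambda>x. 1 / (1 + x^2)"] DERIV_arctan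
    by (auto simp: inverse_eq_divide power2_eq_square)
  have d: "(c + 1/2) / L - (c - 1/2) / L = 1 / L" using Lp by (simp add: field_simps)
  have near: "\<bar>c / L - \<xi>\<bar> \<le> 1/2"
  proof -
    have "c / L - 1 / (2 * L) < \<xi>" "\<xi> < c / L + 1 / (2 * L)" using \<xi>(1,2) Lp by (simp_all add: field_simps)
    moreover have "1 / (2 * L) \<le> 1/2" using L by (simp add: field_simps)
    ultimately show ?thesis by linarith
  qed
  have sq: "1 + \<xi>^2 \<le> 2 * (1 + (c / L)^2)"
  proof -
    define t where "t = c / L"
    have "\<bar>t - \<xi>\<bar> \<le> 1/2" using near unfolding t_def .
    then have "\<bar>\<xi>\<bar> \<le> \<bar>t\<bar> + 1/2" by linarith
    then have "\<xi>^2 \<le> (\<bar>t\<bar> + 1/2)^2" by (metis abs_ge_zero power2_abs power_mono)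
    also have "\<dots> = t^2 + \<bar>t\<bar> + 1/4" by (simp add: power2_eq_square algebra_simps)
    also have "\<dots> \<le> 2 * t^2 + 1/2"
    proof -
      have "0 \<le> (\<bar>t\<bar> - 1/2)^2" by simp
      then have "\<bar>t\<bar> \<le> t^2 + 1/4" by (simp add: power2_eq_square algebra_simps)
      then show ?thesis by linarith
    qed
    finally have A: "\<xi>^2 \<le> 2 * (c / L)^2 + 1/2" unfolding t_def .
    then show ?thesis by (simp add: algebra_simps)
  qed
  have p1: "0 < 1 + \<xi>^2" by (simp add: add_pos_nonneg)
  have p2: "0 < 1 + (c / L)^2" by (simp add: add_pos_nonneg)
  have "wt (c / L) = 1 / (1 + (c / L)^2)" unfolding wt_def ..
  also have "\<dots> \<le> 2 / (1 + \<xi>^2)" using sq p1 p2 by (simp add: field_simps)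
  also have "\<dots> = 2 * L * (arctan ((c + 1/2) / L) - arctan ((c - 1/2) / L))"
    unfolding \<xi>(3) d using Lp by simp
  finally show ?thesis .
qed

lemma sum_wt_int:
  fixes L :: real
  assumes L: "L \<ge> 1" and N: "finite (N :: int set)"
  shows "(\<Sum>n\<in>N. wt (of_int n / L)) \<le> 2 * pi * L"
proof -
  obtain M :: nat where M: "\<And>n. n \<in> N \<Longrightarrow> \<bar>n\<bar> \<le> int M"
  proof -
    define M where "M = nat (Max (insert 0 (abs ` N)))"
    have "\<bar>n\<bar> \<le> int M" if "n \<in> N" for n
      unfolding M_def using N that by (simp add: Max_ge_iff)
    then show ?thesis using that by blast
  qed
  define h where "h m = int m - int M" for m :: nat
  have sub: "N \<subseteq> h ` {..<2 * M + 1}"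
  proof
    fix n assume "n \<in> N"
    then have "\<bar>n\<bar> \<le> int M" by (rule M)
    then have "nat (n + int M) < 2 * M + 1" "h (nat (n + int M)) = n" unfolding h_def by auto
    then show "n \<in> h ` {..<2 * M + 1}" by (metis image_eqI lessThan_iff)
  qed
  have inj: "inj_on h {..<2 * M + 1}" unfolding h_def inj_on_def by auto
  define F where "F m = arctan ((real m - real M - 1/2) / L)" for m :: nat
  have "(\<Sum>n\<in>N. wt (of_int n / L)) \<le> (\<Sum>n\<in>h ` {..<2 * M + 1}. wt (of_int n / L))"
    by (rule sum_mono2[OF _ sub]) (auto intro: less_imp_le wt_pos)
  also have "\<dots> = (\<Sum>m<2 * M + 1. wt (of_int (h m) / L))"
    using sum.reindex[OF inj, of "\<lambda>n. wt (of_int n / L)"] by (simp only: comp_def)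
  also have "\<dots> \<le> (\<Sum>m<2 * M + 1. 2 * L * (F (Suc m) - F m))"
  proof (rule sum_mono)
    fix m
    have "wt (of_int (h m) / L) \<le> 2 * L * (arctan ((of_int (h m) + 1/2) / L) - arctan ((of_int (h m) - 1/2) / L))"
      by (rule wt_term[OF L])
    also have "\<dots> = 2 * L * (F (Suc m) - F m)" unfolding F_def h_def by (simp add: algebra_simps)
    finally show "wt (of_int (h m) / L) \<le> 2 * L * (F (Suc m) - F m)" .
  qed
  also have "\<dots> = 2 * L * (F (2 * M + 1) - F 0)"
    by (simp add: sum_distrib_left[symmetric] sum_lessThan_telescope)
  also have "\<dots> \<le> 2 * L * pi"
  proof -
    have "F (2 * M + 1) - F 0 \<le> pi" unfolding F_def
      using arctan_ubound[of "(real (2 * M + 1) - real M - 1/2) / L"] arctan_lbound[of "(real 0 - real M - 1/2) / L"]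
      by linarith
    then show ?thesis using L by (intro mult_left_mono) auto
  qed
  finally show ?thesis by (simp add: mult_ac)
qed

lemma sum_wt_lat:
  fixes L :: real
  assumes L: "L \<ge> 1" and Z: "finite Z" "\<And>t. t \<in> Z \<Longrightarrow> \<exists>n::int. t = of_int n / L"
  shows "(\<Sum>t\<in>Z. wt t) \<le> 2 * pi * L"
proof -
  define q where "q n = of_int n / L" for n :: int
  have inj: "inj q" unfolding q_def inj_def using L by auto
  define N where "N = q -` Z"
  have fN: "finite N" unfolding N_def by (rule finite_vimageI[OF Z(1) inj])
  have ZN: "Z = q ` N" unfolding N_def q_def using Z(2) by auto
  have "(\<Sum>t\<in>Z. wt t) = (\<Sum>n\<in>N. wt (of_int n / L))"
    unfolding ZN by (subst sum.reindex) (auto intro: inj_on_subset[OF inj] simp: q_def)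
  also have "\<dots> \<le> 2 * pi * L" by (rule sum_wt_int[OF L fN])
  finally show ?thesis .
qed

lemma sum_prod_wt:
  fixes L :: real and K :: "(real^'d::finite) set"
  assumes L: "L \<ge> 1" and K: "finite K" "K \<subseteq> dual_lattice L"
  shows "(\<Sum>k\<in>K. \<Prod>i\<in>UNIV. wt (k $ i)) \<le> (2 * pi * L) ^ CARD('d)"
proof -
  define Z where "Z i = (\<lambda>k. k $ i) ` K" for i
  have fZ: "finite (Z i)" for i unfolding Z_def using K by simp
  have inj: "inj_on vec_nth K" by (auto simp: inj_on_def vec_nth_inject)
  have sub: "vec_nth ` K \<subseteq> PiE UNIV Z" unfolding Z_def by (auto simp: PiE_iff)
  have "(\<Sum>k\<in>K. \<Prod>i\<in>UNIV. wt (k $ i)) = (\<Sum>g\<in>vec_nth ` K. \<Prod>i\<in>UNIV. wt (g i))"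
    by (simp add: sum.reindex[OF inj])
  also have "\<dots> \<le> (\<Sum>g\<in>PiE UNIV Z. \<Prod>i\<in>UNIV. wt (g i))"
    by (rule sum_mono2[OF _ sub]) (auto intro!: finite_PiE fZ prod_nonneg intro: less_imp_le wt_pos)
  also have "\<dots> = (\<Prod>i\<in>UNIV. \<Sum>t\<in>Z i. wt t)"
    by (rule prod_sum_PiE[symmetric]) (auto simp: fZ)
  also have "\<dots> \<le> (\<Prod>i\<in>(UNIV::'d set). 2 * pi * L)"
  proof (rule prod_mono, rule conjI)
    fix i
    show "0 \<le> (\<Sum>t\<in>Z i. wt t)" by (intro sum_nonneg) (auto intro: less_imp_le wt_pos)
    show "(\<Sum>t\<in>Z i. wt t) \<le> 2 * pi * L"
    proof (rule sum_wt_lat[OF L fZ])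
      fix t assume "t \<in> Z i"
      then obtain k where "k \<in> K" "t = k $ i" unfolding Z_def by auto
      then show "\<exists>n::int. t = of_int n / L" using K(2) unfolding dual_lattice_def by auto
    qed
  qed
  also have "\<dots> = (2 * pi * L) ^ CARD('d)" by simp
  finally show ?thesis .
qed

lemma jbr_real_sq: "jbr (t::real) ^ 2 = 1 + t^2"
  unfolding jbr_def by (simp add: add_nonneg_nonneg)

lemma main_bound:
  fixes f :: "real^'d::finite \<Rightarrow> complex"
  assumes L: "L \<ge> 1" and s: "schwartz f" and ev: "\<And>j x. f (reflect j x) = f x"
    and k: "k \<in> dual_lattice L"
  shows "(\<Prod>j\<in>UNIV. jbr (k $ j) ^ 2) * cmod (fourier_box L f k) \<le> (4 * pi) ^ CARD('d) * schwartz_seminorm f"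
    and "cmod (fourier_box L f k) \<le> (4 * pi) ^ CARD('d) * schwartz_seminorm f * (\<Prod>j\<in>UNIV. wt (k $ j))"
proof -
  have a: "L / 2 > 0" using L by simp
  have kL: "k $ i * (2 * (L / 2)) \<in> \<int>" for i
  proof -
    obtain n :: int where "k $ i = of_int n / L" using k unfolding dual_lattice_def by blast
    then have "k $ i * (2 * (L / 2)) = of_int n" using L by simp
    then show ?thesis by simp
  qed
  have c: "continuous_on UNIV f" using s unfolding schwartz_def by (metis partials.simps(1))
  have F: "fourier_box L f k = PP (L/2) k UNIV f 0" by (rule fourier_PP[OF c])
  have cl: "(\<Prod>i\<in>UNIV. (1 + 4 * pi^2 * (k $ i)^2)) * norm (PP (L/2) k UNIV f 0)
      \<le> 4 ^ card (UNIV::'d set) * pi ^ card (UNIV::'d set) * schwartz_seminorm f"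
    by (rule claim[OF a kL subset_refl schwartz_good[OF s ev]])
  have le: "(\<Prod>j\<in>UNIV. jbr (k $ j) ^ 2) \<le> (\<Prod>i\<in>UNIV. (1 + 4 * pi^2 * (k $ i)^2))"
  proof (rule prod_mono, rule conjI)
    fix i
    show "0 \<le> jbr (k $ i) ^ 2" by simp
    have "(2::real)^2 \<le> pi^2" using pi_ge_two by (intro power_mono) auto
    then have "1 \<le> 4 * pi^2" by simp
    then have "1 * (k $ i)^2 \<le> (4 * pi^2) * (k $ i)^2" by (intro mult_right_mono) auto
    then show "jbr (k $ i) ^ 2 \<le> 1 + 4 * pi^2 * (k $ i)^2" unfolding jbr_real_sq by simp
  qed
  have P: "(\<Prod>j\<in>UNIV. jbr (k $ j) ^ 2) * cmod (fourier_box L f k) \<le> (4 * pi) ^ CARD('d) * schwartz_seminorm f"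
  proof -
    have "(\<Prod>j\<in>UNIV. jbr (k $ j) ^ 2) * cmod (fourier_box L f k) \<le> (\<Prod>i\<in>UNIV. (1 + 4 * pi^2 * (k $ i)^2)) * norm (PP (L/2) k UNIV f 0)"
      unfolding F by (intro mult_right_mono le) auto
    also have "\<dots> \<le> (4 * pi) ^ CARD('d) * schwartz_seminorm f"
      using cl by (simp add: power_mult_distrib)
    finally show ?thesis .
  qed
  then show "(\<Prod>j\<in>UNIV. jbr (k $ j) ^ 2) * cmod (fourier_box L f k) \<le> (4 * pi) ^ CARD('d) * schwartz_seminorm f" .
  have pw: "(\<Prod>j\<in>UNIV. wt (k $ j)) = 1 / (\<Prod>j\<in>UNIV. jbr (k $ j) ^ 2)"
    unfolding wt_def jbr_real_sq by (simp add: prod_dividef)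
  have pp: "(\<Prod>j\<in>UNIV. jbr (k $ j) ^ 2) > 0"
    by (intro prod_pos) (simp add: jbr_real_sq add_pos_nonneg)
  show "cmod (fourier_box L f k) \<le> (4 * pi) ^ CARD('d) * schwartz_seminorm f * (\<Prod>j\<in>UNIV. wt (k $ j))"
    unfolding pw using P pp by (simp add: field_simps)
qed

theorem lemma6:
  "\<exists>C C'::real. \<forall>(L::real) (f::real^'d::finite \<Rightarrow> complex).
     L \<ge> 1 \<and> schwartz f \<and> (\<forall>j x. f (reflect j x) = f x) \<longrightarrow>
       (\<forall>k \<in> dual_lattice L.
          (\<Prod>j\<in>UNIV. jbr (k $ j) ^ 2) * cmod (fourier_box L f k) \<le> C * schwartz_seminorm f) \<and>
       (\<lambda>k. cmod (fourier_box L f k)) summable_on dual_lattice L \<and>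
       (1 / L ^ CARD('d)) * (\<Sum>\<^sub>\<infinity>k\<in>dual_lattice L. cmod (fourier_box L f k))
          \<le> C' * schwartz_seminorm f"
proof (rule exI[of _ "(4 * pi) ^ CARD('d)"], rule exI[of _ "(4 * pi) ^ CARD('d) * (2 * pi) ^ CARD('d)"], intro allI impI)
  fix L :: real and f :: "real^'d \<Rightarrow> complex"
  assume H: "L \<ge> 1 \<and> schwartz f \<and> (\<forall>j x. f (reflect j x) = f x)"
  then have L: "L \<ge> 1" and s: "schwartz f" and ev: "\<And>j x. f (reflect j x) = f x" by auto
  define C where "C = (4 * pi) ^ CARD('d) * schwartz_seminorm f"
  have S0: "schwartz_seminorm f \<ge> 0"
    by (rule seminorm_ge(2)[OF s, of "\<lambda>_. 0"]) simp
  have C0: "C \<ge> 0" unfolding C_def using S0 by simp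
  have A: "\<forall>k \<in> dual_lattice L.
          (\<Prod>j\<in>UNIV. jbr (k $ j) ^ 2) * cmod (fourier_box L f k) \<le> (4 * pi) ^ CARD('d) * schwartz_seminorm f"
    using main_bound(1)[OF L s ev] by blast
  have fin: "(\<Sum>k\<in>K. cmod (fourier_box L f k)) \<le> C * (2 * pi * L) ^ CARD('d)"
    if "finite K" "K \<subseteq> dual_lattice L" for K
  proof -
    have "(\<Sum>k\<in>K. cmod (fourier_box L f k)) \<le> (\<Sum>k\<in>K. C * (\<Prod>j\<in>UNIV. wt (k $ j)))"
      using that main_bound(2)[OF L s ev] unfolding C_def by (intro sum_mono) auto
    also have "\<dots> = C * (\<Sum>k\<in>K. \<Prod>j\<in>UNIV. wt (k $ j))" by (simp add: sum_distrib_left)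
    also have "\<dots> \<le> C * (2 * pi * L) ^ CARD('d)"
      by (intro mult_left_mono sum_prod_wt[OF L that] C0)
    finally show ?thesis .
  qed
  have summ: "(\<lambda>k. cmod (fourier_box L f k)) summable_on dual_lattice L"
    by (rule nonneg_bdd_above_summable_on) (auto intro!: bdd_aboveI2 fin)
  have "(\<Sum>\<^sub>\<infinity>k\<in>dual_lattice L. cmod (fourier_box L f k)) \<le> C * (2 * pi * L) ^ CARD('d)"
    by (rule infsum_le_finite_sums[OF summ fin])
  then have "(1 / L ^ CARD('d)) * (\<Sum>\<^sub>\<infinity>k\<in>dual_lattice L. cmod (fourier_box L f k))
      \<le> (1 / L ^ CARD('d)) * (C * (2 * pi * L) ^ CARD('d))"
    using L by (intro mult_left_mono) auto
  also have "\<dots> = ((4 * pi) ^ CARD('d) * (2 * pi) ^ CARD('d)) * schwartz_seminorm f"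
    unfolding C_def using L by (simp add: power_mult_distrib field_simps)
  finally have D: "(1 / L ^ CARD('d)) * (\<Sum>\<^sub>\<infinity>k\<in>dual_lattice L. cmod (fourier_box L f k))
      \<le> ((4 * pi) ^ CARD('d) * (2 * pi) ^ CARD('d)) * schwartz_seminorm f" .
  show "(\<forall>k \<in> dual_lattice L.
          (\<Prod>j\<in>UNIV. jbr (k $ j) ^ 2) * cmod (fourier_box L f k) \<le> (4 * pi) ^ CARD('d) * schwartz_seminorm f) \<and>
       (\<lambda>k. cmod (fourier_box L f k)) summable_on dual_lattice L \<and>
       (1 / L ^ CARD('d)) * (\<Sum>\<^sub>\<infinity>k\<in>dual_lattice L. cmod (fourier_box L f k))
          \<le> ((4 * pi) ^ CARD('d) * (2 * pi) ^ CARD('d)) * schwartz_seminorm f"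
    using A summ D by blast
qed

end
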